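(* Let $R$ be a $*$-ring. The following are equivalent: (1) $R$ is strongly $\pi$-$*$-regular. (2) $R/J(R)$ is strongly $\pi$-$*$-regular, $J(R)$ is nil, every projection of $R$ is central, and every projection of $R/J(R)$ lifts to a projection of $R$. (3) $R/J(R)$ is strongly $*$-regular, $J(R)$ is nil, and every idempotent of $R/J(R)$ lifts to a central projection of $R$.
   Context: A $*$-ring is a ring with identity with an involution $*$. $J(R)$ is the Jacobson radical; it satisfies $J(R)^*\subseteq J(R)$, so $R/J(R)$ is a $*$-ring with the induced involution $(a+J(R))^*=a^*+J(R)$. A projection is $p$ with $p^2=p=p^*$. A $*$-ring is strongly $*$-regular if every element $a$ can be written $a=pu=up$ with $p$ a projection and $u$ a unit; it is strongly $\pi$-$*$-regular if for every $a$ there exist a projection $e$, a unit $u$ and $m\ge1$ with $a^m=eu$ and $a,e,u$ pairwise commuting. *)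

theory Defs
  imports "HOL-Algebra.QuotRing"
begin

definition star_ring :: "('a, 'b) ring_scheme \<Rightarrow> ('a \<Rightarrow> 'a) \<Rightarrow> bool" where
  "star_ring R s \<longleftrightarrow> ring R \<and> (\<forall>a \<in> carrier R. s a \<in> carrier R) \<and>
     (\<forall>a \<in> carrier R. \<forall>b \<in> carrier R. s (a \<oplus>\<^bsub>R\<^esub> b) = s a \<oplus>\<^bsub>R\<^esub> s b) \<and>
     (\<forall>a \<in> carrier R. \<forall>b \<in> carrier R. s (a \<otimes>\<^bsub>R\<^esub> b) = s b \<otimes>\<^bsub>R\<^esub> s a) \<and>
     (\<forall>a \<in> carrier R. s (s a) = a)"

definition projection :: "('a, 'b) ring_scheme \<Rightarrow> ('a \<Rightarrow> 'a) \<Rightarrow> 'a \<Rightarrow> bool" where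
  "projection R s p \<longleftrightarrow> p \<in> carrier R \<and> p \<otimes>\<^bsub>R\<^esub> p = p \<and> s p = p"

definition idempotent_el :: "('a, 'b) ring_scheme \<Rightarrow> 'a \<Rightarrow> bool" where
  "idempotent_el R e \<longleftrightarrow> e \<in> carrier R \<and> e \<otimes>\<^bsub>R\<^esub> e = e"

definition central :: "('a, 'b) ring_scheme \<Rightarrow> 'a \<Rightarrow> bool" where
  "central R x \<longleftrightarrow> x \<in> carrier R \<and> (\<forall>y \<in> carrier R. x \<otimes>\<^bsub>R\<^esub> y = y \<otimes>\<^bsub>R\<^esub> x)"

definition strongly_star_regular :: "('a, 'b) ring_scheme \<Rightarrow> ('a \<Rightarrow> 'a) \<Rightarrow> bool" where
  "strongly_star_regular R s \<longleftrightarrow>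
     (\<forall>a \<in> carrier R. \<exists>p u. projection R s p \<and> u \<in> Units R \<and>
        a = p \<otimes>\<^bsub>R\<^esub> u \<and> a = u \<otimes>\<^bsub>R\<^esub> p)"

definition strongly_pi_star_regular :: "('a, 'b) ring_scheme \<Rightarrow> ('a \<Rightarrow> 'a) \<Rightarrow> bool" where
  "strongly_pi_star_regular R s \<longleftrightarrow>
     (\<forall>a \<in> carrier R. \<exists>e u (m::nat). m \<ge> 1 \<and> projection R s e \<and> u \<in> Units R \<and>
        a [^]\<^bsub>R\<^esub> m = e \<otimes>\<^bsub>R\<^esub> u \<and>
        a \<otimes>\<^bsub>R\<^esub> e = e \<otimes>\<^bsub>R\<^esub> a \<and> a \<otimes>\<^bsub>R\<^esub> u = u \<otimes>\<^bsub>R\<^esub> a \<and>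
        e \<otimes>\<^bsub>R\<^esub> u = u \<otimes>\<^bsub>R\<^esub> e)"

definition left_ideal :: "'a set \<Rightarrow> ('a, 'b) ring_scheme \<Rightarrow> bool" where
  "left_ideal I R \<longleftrightarrow> additive_subgroup I R \<and>
     (\<forall>r \<in> carrier R. \<forall>x \<in> I. r \<otimes>\<^bsub>R\<^esub> x \<in> I)"

definition maximal_left_ideal :: "'a set \<Rightarrow> ('a, 'b) ring_scheme \<Rightarrow> bool" where
  "maximal_left_ideal I R \<longleftrightarrow> left_ideal I R \<and> I \<noteq> carrier R \<and>
     (\<forall>K. left_ideal K R \<and> I \<subseteq> K \<longrightarrow> K = I \<or> K = carrier R)"

definition jacobson :: "('a, 'b) ring_scheme \<Rightarrow> 'a set" where
  "jacobson R = carrier R \<inter> \<Inter>{I. maximal_left_ideal I R}"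

definition nil_set :: "('a, 'b) ring_scheme \<Rightarrow> 'a set \<Rightarrow> bool" where
  "nil_set R I \<longleftrightarrow> (\<forall>a \<in> I. \<exists>n::nat. a [^]\<^bsub>R\<^esub> n = \<zero>\<^bsub>R\<^esub>)"

text \<open>The involution induced on R/J(R): (a + J)* = a* + J, realised as the image of the coset.\<close>
definition quot_star :: "('a \<Rightarrow> 'a) \<Rightarrow> 'a set \<Rightarrow> 'a set" where
  "quot_star s X = s ` X"

end

theory Submission
  imports Defs
begin


context ring begin
lemma canc1: "\<lbrakk>x \<in> carrier R; y \<in> carrier R; z \<in> carrier R\<rbrakk> \<Longrightarrow> x \<oplus> (y \<oplus> (\<ominus> x \<oplus> z)) = y \<oplus> z"
  using a_lcomm[of x y "\<ominus> x \<oplus> z"] r_neg2[of x z] by simp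
lemma canc2: "\<lbrakk>x \<in> carrier R; y \<in> carrier R; z \<in> carrier R\<rbrakk> \<Longrightarrow> \<ominus> x \<oplus> (y \<oplus> (x \<oplus> z)) = y \<oplus> z"
  using a_lcomm[of "\<ominus> x" y "x \<oplus> z"] r_neg1[of x z] by simp
lemma canc3: "\<lbrakk>x \<in> carrier R; y \<in> carrier R\<rbrakk> \<Longrightarrow> x \<oplus> (y \<oplus> \<ominus> x) = y"
  using a_lcomm[of x y "\<ominus> x"] r_neg[of x] by simp
lemma canc4: "\<lbrakk>x \<in> carrier R; y \<in> carrier R\<rbrakk> \<Longrightarrow> \<ominus> x \<oplus> (y \<oplus> x) = y"
  using a_lcomm[of "\<ominus> x" y x] l_neg[of x] by simp
lemmas rs = ring_simprules r_one

lemma units_of_both: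
  assumes "a \<in> carrier R" "v \<in> carrier R" "b \<in> carrier R" "a \<otimes> v = \<one>" "v \<otimes> b = \<one>"
  shows "v \<in> Units R"
proof -
  have "a = a \<otimes> (v \<otimes> b)" using assms by (simp only: r_one)
  also have "\<dots> = (a \<otimes> v) \<otimes> b" using assms(1-3) by (simp add: m_assoc)
  also have "\<dots> = b" using assms by (simp only: l_one)
  finally have "a = b" .
  then show ?thesis using assms unfolding Units_def by auto
qed

lemma unit_swap:
  assumes p: "p \<in> carrier R" and q: "q \<in> carrier R" and u: "\<one> \<ominus> p \<otimes> q \<in> Units R"
  shows "\<one> \<ominus> q \<otimes> p \<in> Units R"
proof -
  define w where "w = inv (\<one> \<ominus> p \<otimes> q)"
  have w: "w \<in> carrier R" using u w_def by auto
  have wl: "w \<otimes> (\<one> \<ominus> p \<otimes> q) = \<one>" using u w_def by simp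
  have wr: "(\<one> \<ominus> p \<otimes> q) \<otimes> w = \<one>" using u w_def by simp
  have wl': "w \<ominus> w \<otimes> p \<otimes> q = \<one>" using wl p q w by (simp add: rs)
  have wr': "w \<ominus> p \<otimes> q \<otimes> w = \<one>" using wr p q w by (simp add: rs)
  have e1: "(\<one> \<ominus> q \<otimes> p) \<otimes> (\<one> \<oplus> q \<otimes> w \<otimes> p) = \<one>"
  proof -
    have "(\<one> \<ominus> q \<otimes> p) \<otimes> (\<one> \<oplus> q \<otimes> w \<otimes> p) = \<one> \<ominus> q \<otimes> p \<oplus> q \<otimes> (w \<ominus> p \<otimes> q \<otimes> w) \<otimes> p"
      using p q w by (simp add: rs)
    also have "\<dots> = \<one>" using wr' p q w by (simp add: rs)
    finally show ?thesis .
  qed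
  have e2: "(\<one> \<oplus> q \<otimes> w \<otimes> p) \<otimes> (\<one> \<ominus> q \<otimes> p) = \<one>"
  proof -
    have "(\<one> \<oplus> q \<otimes> w \<otimes> p) \<otimes> (\<one> \<ominus> q \<otimes> p) = \<one> \<ominus> q \<otimes> p \<oplus> q \<otimes> (w \<ominus> w \<otimes> p \<otimes> q) \<otimes> p"
      using p q w by (simp add: rs)
    also have "\<dots> = \<one>" using wl' p q w by (simp add: rs)
    finally show ?thesis .
  qed
  show ?thesis using units_of_both[OF _ _ _ e2 e1] p q w by simp
qed

lemma idem_pow:
  assumes "a \<in> carrier R" "a \<otimes> a = a" shows "a [^] Suc k = a"
  using assms by (induct k) auto

lemma idem_eq:
  assumes a: "a \<in> carrier R" and e: "e \<in> carrier R" and u: "u \<in> Units R"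
    and aa: "a \<otimes> a = a" and ee: "e \<otimes> e = e" and aeu: "a = e \<otimes> u"
    and ae: "a \<otimes> e = e \<otimes> a" and au: "a \<otimes> u = u \<otimes> a"
  shows "a = e"
proof -
  have uc: "u \<in> carrier R" "inv u \<in> carrier R" using u by auto
  have e1: "e = a \<otimes> inv u" using aeu u uc e by (simp add: m_assoc)
  have "a \<otimes> e = (a \<otimes> a) \<otimes> inv u" using e1 a uc by (simp add: m_assoc)
  also have "\<dots> = e" using aa e1 by simp
  finally have 1: "a \<otimes> e = e" .
  have "e \<otimes> a = (e \<otimes> e) \<otimes> u" using aeu e uc by (simp add: m_assoc)
  also have "\<dots> = a" using ee aeu by simp
  finally have 2: "e \<otimes> a = a" .
  show ?thesis using 1 2 ae by simp
qed

lemma unit_pow_unit: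
  assumes x: "x \<in> carrier R" and u: "x [^] Suc k \<in> Units R"
  shows "x \<in> Units R"
proof -
  define y where "y = x [^] k"
  have y: "y \<in> carrier R" using x y_def by simp
  have 1: "x [^] Suc k = y \<otimes> x" using y_def by simp
  have 2: "x [^] Suc k = x \<otimes> y" using y_def x nat_pow_Suc2 by simp
  have i: "inv (x [^] Suc k) \<in> carrier R" using u by auto
  have l: "(inv (x [^] Suc k) \<otimes> y) \<otimes> x = \<one>" using 1 u i y x by (simp add: m_assoc)
  have r: "x \<otimes> (y \<otimes> inv (x [^] Suc k)) = \<one>" using 2 u i y x by (simp add: m_assoc[symmetric])
  show ?thesis using units_of_both[OF _ x _ l r] i y by simp
qed

lemma comm_pow:
  assumes "a \<in> carrier R" "b \<in> carrier R" "a \<otimes> b = b \<otimes> a"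
  shows "a \<otimes> b [^] (k::nat) = b [^] k \<otimes> a"
proof (induct k)
  case 0 then show ?case using assms by simp
next
  case (Suc k)
  have "a \<otimes> b [^] Suc k = (a \<otimes> b [^] k) \<otimes> b" using assms by (simp add: m_assoc)
  also have "\<dots> = b [^] k \<otimes> (a \<otimes> b)" using Suc assms by (simp add: m_assoc)
  also have "\<dots> = b [^] Suc k \<otimes> a" using assms by (simp add: m_assoc)
  finally show ?case .
qed

lemma comm_inv:
  assumes "a \<in> carrier R" "u \<in> Units R" "a \<otimes> u = u \<otimes> a"
  shows "a \<otimes> inv u = inv u \<otimes> a"
proof -
  have c: "u \<in> carrier R" "inv u \<in> carrier R" using assms by auto
  have "a \<otimes> inv u = (inv u \<otimes> u) \<otimes> a \<otimes> inv u" using assms c by simp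
  also have "\<dots> = inv u \<otimes> (u \<otimes> a) \<otimes> inv u" using assms c by (simp only: m_assoc)
  also have "\<dots> = inv u \<otimes> (a \<otimes> u) \<otimes> inv u" using assms by simp
  also have "\<dots> = inv u \<otimes> a" using assms(1,2) c by (simp add: m_assoc)
  finally show ?thesis .
qed

lemma geom:
  assumes c: "c \<in> carrier R"
  shows "\<exists>g\<in>carrier R. g \<otimes> (\<one> \<ominus> c) = \<one> \<ominus> c [^] (k::nat) \<and> (\<one> \<ominus> c) \<otimes> g = \<one> \<ominus> c [^] k"
proof (induct k)
  case 0 then show ?case using c by (intro bexI[of _ \<zero>]) (auto simp: rs)
next
  case (Suc k)
  then obtain g where g: "g \<in> carrier R" "g \<otimes> (\<one> \<ominus> c) = \<one> \<ominus> c [^] k" "(\<one> \<ominus> c) \<otimes> g = \<one> \<ominus> c [^] k" by blast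
  have ck: "c [^] k \<in> carrier R" using c by simp
  have s: "c [^] Suc k = c \<otimes> c [^] k" using c nat_pow_Suc2 by simp
  have 1: "(\<one> \<oplus> c \<otimes> g) \<otimes> (\<one> \<ominus> c) = \<one> \<ominus> c \<oplus> c \<otimes> (g \<otimes> (\<one> \<ominus> c))" using c g(1) by (simp add: rs)
  have 2: "(\<one> \<ominus> c) \<otimes> (\<one> \<oplus> c \<otimes> g) = \<one> \<ominus> c \<oplus> c \<otimes> ((\<one> \<ominus> c) \<otimes> g)" using c g(1) by (simp add: rs)
  have 3: "\<one> \<ominus> c \<oplus> c \<otimes> (\<one> \<ominus> c [^] k) = \<one> \<ominus> c [^] Suc k" unfolding s using c ck by (simp add: rs canc1)
  show ?case using 1 2 3 g c by (intro bexI[of _ "\<one> \<oplus> c \<otimes> g"]) auto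
qed

lemma nilp_unit:
  assumes c: "c \<in> carrier R" and n: "c [^] (k::nat) = \<zero>"
  shows "\<one> \<ominus> c \<in> Units R"
proof -
  obtain g where g: "g \<in> carrier R" "g \<otimes> (\<one> \<ominus> c) = \<one> \<ominus> c [^] k" "(\<one> \<ominus> c) \<otimes> g = \<one> \<ominus> c [^] k"
    using geom[OF c] by blast
  have "\<one> \<ominus> c [^] k = \<one>" using n by (simp add: rs)
  then show ?thesis using units_of_both[of g "\<one> \<ominus> c" g] g c by simp
qed

definition cpair where
  "cpair p q \<longleftrightarrow> p \<in> carrier R \<and> q \<in> carrier R \<and> p \<otimes> p = p \<and> q \<otimes> q = q \<and> p \<otimes> q = \<zero> \<and> q \<otimes> p = \<zero>
     \<and> p \<oplus> q = \<one> \<and> (\<forall>y\<in>carrier R. p \<otimes> y = y \<otimes> p \<and> q \<otimes> y = y \<otimes> q)"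

lemma cpairI:
  assumes "central R p" "p \<otimes> p = p"
  shows "cpair p (\<one> \<ominus> p)"
proof -
  have p: "p \<in> carrier R" and pc: "\<And>y. y \<in> carrier R \<Longrightarrow> p \<otimes> y = y \<otimes> p"
    using assms(1) unfolding central_def by auto
  have q: "\<one> \<ominus> p \<in> carrier R" using p by simp
  have pq: "p \<otimes> (\<one> \<ominus> p) = \<zero>" using p assms(2) by (simp add: rs)
  have qp: "(\<one> \<ominus> p) \<otimes> p = \<zero>" using p assms(2) by (simp add: rs)
  have qq: "(\<one> \<ominus> p) \<otimes> (\<one> \<ominus> p) = \<one> \<ominus> p" using p assms(2) by (simp add: rs)
  have "p \<oplus> (\<one> \<ominus> p) = \<one> \<oplus> (p \<ominus> p)" using p by (simp add: minus_eq a_lcomm)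
  also have "\<dots> = \<one>" using p by (simp add: r_neg minus_eq)
  finally have s: "p \<oplus> (\<one> \<ominus> p) = \<one>" .
  have qc: "(\<one> \<ominus> p) \<otimes> y = y \<otimes> (\<one> \<ominus> p)" if "y \<in> carrier R" for y
  proof -
    have "(\<one> \<ominus> p) \<otimes> y = y \<ominus> p \<otimes> y" using p that by (simp add: rs)
    also have "\<dots> = y \<ominus> y \<otimes> p" using pc that by simp
    also have "\<dots> = y \<otimes> (\<one> \<ominus> p)" using p that by (simp add: rs)
    finally show ?thesis .
  qed
  show ?thesis unfolding cpair_def
  proof (intro conjI ballI)
    fix y assume y: "y \<in> carrier R"
    show "p \<otimes> y = y \<otimes> p" by (rule pc[OF y])
    show "(\<one> \<ominus> p) \<otimes> y = y \<otimes> (\<one> \<ominus> p)" by (rule qc[OF y])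
  qed (fact p q assms(2) qq pq qp s)+
qed

lemma pp_prod:
  assumes cp: "cpair p q" and x: "x \<in> carrier R" and y: "y \<in> carrier R"
  shows "(p \<otimes> x \<oplus> q) \<otimes> (p \<otimes> y \<oplus> q) = p \<otimes> (x \<otimes> y) \<oplus> q"
proof -
  have p: "p \<in> carrier R" and q: "q \<in> carrier R" and pp: "p \<otimes> p = p" and qq: "q \<otimes> q = q"
    and pq: "p \<otimes> q = \<zero>" and qp: "q \<otimes> p = \<zero>" and pc: "\<And>z. z \<in> carrier R \<Longrightarrow> p \<otimes> z = z \<otimes> p"
    and qc: "\<And>z. z \<in> carrier R \<Longrightarrow> q \<otimes> z = z \<otimes> q"
    using cp unfolding cpair_def by blast+
  have e: "(p \<otimes> x \<oplus> q) \<otimes> (p \<otimes> y \<oplus> q) = (p \<otimes> x) \<otimes> (p \<otimes> y) \<oplus> ((p \<otimes> x) \<otimes> q \<oplus> (q \<otimes> (p \<otimes> y) \<oplus> q \<otimes> q))"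
    using p q x y by (simp add: rs)
  have 1: "(p \<otimes> x) \<otimes> (p \<otimes> y) = p \<otimes> (x \<otimes> y)"
  proof -
    have "(p \<otimes> x) \<otimes> (p \<otimes> y) = p \<otimes> ((x \<otimes> p) \<otimes> y)" using p x y by (simp add: m_assoc)
    also have "\<dots> = p \<otimes> ((p \<otimes> x) \<otimes> y)" by (simp only: pc[OF x])
    also have "\<dots> = (p \<otimes> p) \<otimes> (x \<otimes> y)" using p x y by (simp add: m_assoc)
    finally show ?thesis using pp by simp
  qed
  have 2: "(p \<otimes> x) \<otimes> q = \<zero>"
  proof -
    have "(p \<otimes> x) \<otimes> q = p \<otimes> (x \<otimes> q)" using p q x by (simp add: m_assoc)
    also have "\<dots> = p \<otimes> (q \<otimes> x)" by (simp only: qc[OF x])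
    also have "\<dots> = (p \<otimes> q) \<otimes> x" using p q x by (simp add: m_assoc)
    finally show ?thesis using pq x by simp
  qed
  have 3: "q \<otimes> (p \<otimes> y) = \<zero>" using qp p q y by (simp add: m_assoc[symmetric])
  show ?thesis using e 1 2 3 qq p q x y by simp
qed

lemma pp_pow:
  assumes cp: "cpair p q" and x: "x \<in> carrier R"
  shows "(p \<otimes> x \<oplus> q) [^] (k::nat) = p \<otimes> x [^] k \<oplus> q"
proof (induct k)
  case 0
  have "p \<in> carrier R" "q \<in> carrier R" "p \<oplus> q = \<one>" using cp unfolding cpair_def by blast+
  then show ?case by simp
next
  case (Suc k)
  have p: "p \<in> carrier R" and q: "q \<in> carrier R" using cp unfolding cpair_def by blast+
  have "(p \<otimes> x \<oplus> q) [^] Suc k = (p \<otimes> x [^] k \<oplus> q) \<otimes> (p \<otimes> x \<oplus> q)" using Suc by simp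
  also have "\<dots> = p \<otimes> x [^] Suc k \<oplus> q" using pp_prod[OF cp, of "x [^] k" x] x by simp
  finally show ?case .
qed

lemma pp_unit:
  assumes cp: "cpair p q" and u: "u \<in> Units R"
  shows "p \<otimes> u \<oplus> q \<in> Units R"
proof -
  have p: "p \<in> carrier R" and q: "q \<in> carrier R" and s: "p \<oplus> q = \<one>" using cp unfolding cpair_def by blast+
  have uc: "u \<in> carrier R" "inv u \<in> carrier R" using u by auto
  have 1: "(p \<otimes> u \<oplus> q) \<otimes> (p \<otimes> inv u \<oplus> q) = \<one>" using pp_prod[OF cp uc] u s p by simp
  have 2: "(p \<otimes> inv u \<oplus> q) \<otimes> (p \<otimes> u \<oplus> q) = \<one>" using pp_prod[OF cp uc(2) uc(1)] u s p by simp
  show ?thesis using units_of_both[OF _ _ _ 2 1] p q uc by simp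
qed

lemma qpow:
  assumes cp: "cpair p q" and x: "x \<in> carrier R"
  shows "(q \<otimes> x) [^] (k::nat) \<otimes> q = q \<otimes> x [^] k"
proof (induct k)
  case 0
  have "q \<in> carrier R" using cp unfolding cpair_def by blast+
  then show ?case by simp
next
  case (Suc k)
  have q: "q \<in> carrier R" and qq: "q \<otimes> q = q" and qc: "\<And>z. z \<in> carrier R \<Longrightarrow> q \<otimes> z = z \<otimes> q"
    using cp unfolding cpair_def by blast+
  have "(q \<otimes> x) \<otimes> q = q \<otimes> (x \<otimes> q)" using q x by (simp add: m_assoc)
  also have "\<dots> = q \<otimes> (q \<otimes> x)" by (simp only: qc[OF x])
  also have "\<dots> = q \<otimes> x" using q x qq by (simp add: m_assoc[symmetric])
  finally have a: "(q \<otimes> x) \<otimes> q = q \<otimes> x" .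
  have "(q \<otimes> x) [^] Suc k \<otimes> q = (q \<otimes> x) [^] k \<otimes> ((q \<otimes> x) \<otimes> q)" using q x by (simp add: m_assoc)
  also have "\<dots> = ((q \<otimes> x) [^] k \<otimes> q) \<otimes> x" using a q x by (simp add: m_assoc)
  also have "\<dots> = q \<otimes> x [^] Suc k" using Suc q x by (simp add: m_assoc)
  finally show ?case .
qed

end


context ring begin

lemma add_sgI:
  assumes "H \<subseteq> carrier R" "\<zero> \<in> H" "\<And>x y. x \<in> H \<Longrightarrow> y \<in> H \<Longrightarrow> x \<oplus> y \<in> H"
    "\<And>x. x \<in> H \<Longrightarrow> \<ominus> x \<in> H"
  shows "additive_subgroup H R"
  apply (rule additive_subgroupI, rule subgroup.intro)
  using assms by (auto simp: a_inv_def[symmetric])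

lemma left_idealI:
  assumes "H \<subseteq> carrier R" "\<zero> \<in> H" "\<And>x y. x \<in> H \<Longrightarrow> y \<in> H \<Longrightarrow> x \<oplus> y \<in> H"
    "\<And>x. x \<in> H \<Longrightarrow> \<ominus> x \<in> H" "\<And>r x. r \<in> carrier R \<Longrightarrow> x \<in> H \<Longrightarrow> r \<otimes> x \<in> H"
  shows "left_ideal H R"
  unfolding left_ideal_def using add_sgI[OF assms(1-4)] assms(5) by blast

lemma left_idealD:
  assumes "left_ideal H R"
  shows "H \<subseteq> carrier R" "\<zero> \<in> H" "\<And>x y. x \<in> H \<Longrightarrow> y \<in> H \<Longrightarrow> x \<oplus> y \<in> H"
    "\<And>x. x \<in> H \<Longrightarrow> \<ominus> x \<in> H" "\<And>r x. r \<in> carrier R \<Longrightarrow> x \<in> H \<Longrightarrow> r \<otimes> x \<in> H"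
proof -
  have a: "additive_subgroup H R" and m: "\<forall>r\<in>carrier R. \<forall>x\<in>H. r \<otimes> x \<in> H"
    using assms unfolding left_ideal_def by auto
  show "H \<subseteq> carrier R" by (rule additive_subgroup.a_subset[OF a])
  show "\<zero> \<in> H" by (rule additive_subgroup.zero_closed[OF a])
  show "\<And>x y. x \<in> H \<Longrightarrow> y \<in> H \<Longrightarrow> x \<oplus> y \<in> H" by (rule additive_subgroup.a_closed[OF a])
  show "\<And>x. x \<in> H \<Longrightarrow> \<ominus> x \<in> H" by (rule additive_subgroup.a_inv_closed[OF a])
  show "\<And>r x. r \<in> carrier R \<Longrightarrow> x \<in> H \<Longrightarrow> r \<otimes> x \<in> H" using m by blast
qed

lemma left_ideal_one:
  assumes "left_ideal H R" "\<one> \<in> H" shows "H = carrier R"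
proof
  show "H \<subseteq> carrier R" using left_idealD(1)[OF assms(1)] .
  show "carrier R \<subseteq> H"
  proof
    fix x assume "x \<in> carrier R"
    then have "x \<otimes> \<one> \<in> H" using left_idealD(5)[OF assms(1)] assms(2) by blast
    then show "x \<in> H" using \<open>x \<in> carrier R\<close> by simp
  qed
qed

lemma exists_max:
  assumes L: "left_ideal L R" and nL: "\<one> \<notin> L"
  shows "\<exists>M. maximal_left_ideal M R \<and> L \<subseteq> M"
proof -
  define A where "A = {K. left_ideal K R \<and> L \<subseteq> K \<and> \<one> \<notin> K}"
  have LA: "L \<in> A" using L nL unfolding A_def by blast
  have "\<forall>C\<in>chains A. \<exists>U\<in>A. \<forall>X\<in>C. X \<subseteq> U"
  proof
    fix C assume C: "C \<in> chains A"
    show "\<exists>U\<in>A. \<forall>X\<in>C. X \<subseteq> U"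
    proof (cases "C = {}")
      case True
      show ?thesis using LA True by blast
    next
      case False
      have CA: "C \<subseteq> A" using C unfolding chains_def by blast
      have ch: "\<And>X Y. X \<in> C \<Longrightarrow> Y \<in> C \<Longrightarrow> X \<subseteq> Y \<or> Y \<subseteq> X"
        using C unfolding chains_def chain_subset_def by blast
      have li: "\<And>X. X \<in> C \<Longrightarrow> left_ideal X R" using CA unfolding A_def by blast
      obtain X0 where X0: "X0 \<in> C" using False by blast
      have "left_ideal (\<Union>C) R"
      proof (rule left_idealI)
        show "\<Union>C \<subseteq> carrier R"
        proof
          fix x assume "x \<in> \<Union>C"
          then obtain X where X: "X \<in> C" "x \<in> X" by blast
          have "X \<subseteq> carrier R" by (rule left_idealD(1)[OF li[OF X(1)]])
          then show "x \<in> carrier R" using X(2) by blast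
        qed
        have "\<zero> \<in> X0" by (rule left_idealD(2)[OF li[OF X0]])
        then show "\<zero> \<in> \<Union>C" using X0 by blast
        show "x \<oplus> y \<in> \<Union>C" if xy: "x \<in> \<Union>C" "y \<in> \<Union>C" for x y
        proof -
          obtain X Y where XY: "X \<in> C" "Y \<in> C" "x \<in> X" "y \<in> Y" using xy by blast
          from ch[OF XY(1,2)] show ?thesis
          proof (elim disjE)
            assume XsY: "X \<subseteq> Y"
            then have "x \<in> Y" using XY(3) by (rule subsetD)
            then have "x \<oplus> y \<in> Y" by (rule left_idealD(3)[OF li[OF XY(2)] _ XY(4)])
            then show ?thesis using XY(2) by (rule UnionI[rotated])
          next
            assume YsX: "Y \<subseteq> X"
            then have "y \<in> X" using XY(4) by (rule subsetD)
            then have "x \<oplus> y \<in> X" by (rule left_idealD(3)[OF li[OF XY(1)] XY(3)])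
            then show ?thesis using XY(1) by (rule UnionI[rotated])
          qed
        qed
        show "\<ominus> x \<in> \<Union>C" if xx: "x \<in> \<Union>C" for x
        proof -
          obtain X where X: "X \<in> C" "x \<in> X" using xx by blast
          have "\<ominus> x \<in> X" by (rule left_idealD(4)[OF li[OF X(1)] X(2)])
          then show ?thesis using X(1) by blast
        qed
        show "r \<otimes> x \<in> \<Union>C" if rx: "r \<in> carrier R" "x \<in> \<Union>C" for r x
        proof -
          obtain X where X: "X \<in> C" "x \<in> X" using rx(2) by blast
          have "r \<otimes> x \<in> X" by (rule left_idealD(5)[OF li[OF X(1)] rx(1) X(2)])
          then show ?thesis using X(1) by blast
        qed
      qed
      moreover have "L \<subseteq> \<Union>C" using X0 CA unfolding A_def by blast
      moreover have "\<one> \<notin> \<Union>C" using CA unfolding A_def by blast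
      ultimately have "\<Union>C \<in> A" unfolding A_def by blast
      then show ?thesis by blast
    qed
  qed
  from Zorn_Lemma2[OF this] obtain M where M: "M \<in> A" and Mmax0: "\<forall>X\<in>A. M \<subseteq> X \<longrightarrow> X = M"
    by (elim bexE)
  have Mmax: "\<And>X. X \<in> A \<Longrightarrow> M \<subseteq> X \<Longrightarrow> X = M" using Mmax0 by blast
  have Mli: "left_ideal M R" and LM: "L \<subseteq> M" and n1: "\<one> \<notin> M" using M unfolding A_def by blast+
  have "maximal_left_ideal M R"
    unfolding maximal_left_ideal_def
  proof (intro conjI allI impI)
    show "left_ideal M R" by (rule Mli)
    show "M \<noteq> carrier R" using n1 by blast
    fix K assume K: "left_ideal K R \<and> M \<subseteq> K"
    show "K = M \<or> K = carrier R"
    proof (cases "\<one> \<in> K")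
      case True then show ?thesis using left_ideal_one K by blast
    next
      case False
      then have "K \<in> A" using K LM unfolding A_def by blast
      then show ?thesis using Mmax K by blast
    qed
  qed
  then show ?thesis using LM by blast
qed

lemma jac_left_inv:
  assumes x: "x \<in> jacobson R" and r: "r \<in> carrier R"
  shows "\<exists>v\<in>carrier R. v \<otimes> (\<one> \<ominus> r \<otimes> x) = \<one>"
proof (rule ccontr)
  assume nex: "\<not> ?thesis"
  have xc: "x \<in> carrier R" using x unfolding jacobson_def by auto
  define y where "y = \<one> \<ominus> r \<otimes> x"
  have yc: "y \<in> carrier R" using xc r y_def by simp
  define L where "L = {z \<otimes> y | z. z \<in> carrier R}"
  have L: "left_ideal L R"
  proof (rule left_idealI)
    show "L \<subseteq> carrier R" using yc L_def by auto
    show "\<zero> \<in> L" unfolding L_def using yc by (auto intro!: exI[of _ \<zero>])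
    show "a \<oplus> b \<in> L" if ab: "a \<in> L" "b \<in> L" for a b
    proof -
      from ab(1) obtain z1 where z1: "z1 \<in> carrier R" "a = z1 \<otimes> y" unfolding L_def by blast
      from ab(2) obtain z2 where z2: "z2 \<in> carrier R" "b = z2 \<otimes> y" unfolding L_def by blast
      from z1 z2 have "z1 \<in> carrier R" "z2 \<in> carrier R" "a = z1 \<otimes> y" "b = z2 \<otimes> y" by auto
      then show ?thesis unfolding L_def using yc by (auto intro!: exI[of _ "z1 \<oplus> z2"] simp: l_distr)
    qed
    show "\<ominus> a \<in> L" if aL: "a \<in> L" for a
    proof -
      from aL obtain z1 where "z1 \<in> carrier R" "a = z1 \<otimes> y" unfolding L_def by blast
      then show ?thesis unfolding L_def using yc by (auto intro!: exI[of _ "\<ominus> z1"] simp: l_minus)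
    qed
    show "c \<otimes> a \<in> L" if ca: "c \<in> carrier R" "a \<in> L" for c a
    proof -
      from ca(2) obtain z1 where "z1 \<in> carrier R" "a = z1 \<otimes> y" unfolding L_def by blast
      then show ?thesis unfolding L_def using yc ca(1) by (auto intro!: exI[of _ "c \<otimes> z1"] simp: m_assoc)
    qed
  qed
  have "\<one> \<notin> L" using nex L_def y_def by auto
  then obtain M where M: "maximal_left_ideal M R" "L \<subseteq> M" using exists_max[OF L] by blast
  have Mli: "left_ideal M R" and Mne: "M \<noteq> carrier R" using M(1) unfolding maximal_left_ideal_def by auto
  have "y \<in> L" unfolding L_def using yc by (auto intro!: exI[of _ \<one>])
  then have yM: "y \<in> M" using M(2) by auto
  have "x \<in> M" using x M(1) unfolding jacobson_def by auto
  then have "r \<otimes> x \<in> M" using left_idealD(5)[OF Mli] r by blast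
  then have "y \<oplus> r \<otimes> x \<in> M" using yM left_idealD(3)[OF Mli] by blast
  moreover have "y \<oplus> r \<otimes> x = \<one>" unfolding y_def using r xc by (simp add: minus_eq a_assoc l_neg)
  ultimately have "\<one> \<in> M" by simp
  then show False using left_ideal_one[OF Mli] Mne by blast
qed

lemma jac_unit:
  assumes x: "x \<in> jacobson R" and r: "r \<in> carrier R"
  shows "\<one> \<ominus> r \<otimes> x \<in> Units R"
proof -
  have xc: "x \<in> carrier R" using x unfolding jacobson_def by auto
  define a where "a = r \<otimes> x"
  have ac: "a \<in> carrier R" using a_def xc r by simp
  obtain v where v: "v \<in> carrier R" "v \<otimes> (\<one> \<ominus> a) = \<one>" using jac_left_inv[OF x r] a_def by blast
  have v1: "v = \<one> \<oplus> v \<otimes> a"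
  proof -
    have "v = v \<otimes> (\<one> \<ominus> a) \<oplus> v \<otimes> a" using v(1) ac by (simp add: rs)
    then show ?thesis using v(2) by simp
  qed
  have nvr: "\<ominus> v \<otimes> r \<in> carrier R" using v r by simp
  obtain w where w: "w \<in> carrier R" "w \<otimes> (\<one> \<ominus> (\<ominus> v \<otimes> r) \<otimes> x) = \<one>" using jac_left_inv[OF x nvr] by blast
  have "\<one> \<ominus> (\<ominus> v \<otimes> r) \<otimes> x = \<one> \<oplus> v \<otimes> (r \<otimes> x)" using v(1) r xc by (simp add: rs)
  also have "\<dots> = v" unfolding a_def[symmetric] by (rule v1[symmetric])
  finally have "\<one> \<ominus> (\<ominus> v \<otimes> r) \<otimes> x = v" .
  then have wv: "w \<otimes> v = \<one>" using w(2) by simp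
  have "w = w \<otimes> (v \<otimes> (\<one> \<ominus> a))" using v(2) w(1) by simp
  also have "\<dots> = (w \<otimes> v) \<otimes> (\<one> \<ominus> a)" using w(1) v(1) ac by (simp add: m_assoc)
  also have "\<dots> = \<one> \<ominus> a" using wv ac by simp
  finally have "w = \<one> \<ominus> a" .
  then have "(\<one> \<ominus> a) \<otimes> v = \<one>" using wv by simp
  then show ?thesis using units_of_both[of v "\<one> \<ominus> a" v] v ac a_def by simp
qed

end


context ring begin

lemma jac_eq: "jacobson R = {x \<in> carrier R. \<forall>r\<in>carrier R. \<one> \<ominus> r \<otimes> x \<in> Units R}"
proof
  show "jacobson R \<subseteq> {x \<in> carrier R. \<forall>r\<in>carrier R. \<one> \<ominus> r \<otimes> x \<in> Units R}"
  proof
    fix x assume x: "x \<in> jacobson R"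
    have "x \<in> carrier R" using x unfolding jacobson_def by simp
    then show "x \<in> {x \<in> carrier R. \<forall>r\<in>carrier R. \<one> \<ominus> r \<otimes> x \<in> Units R}"
      using jac_unit[OF x] by simp
  qed
next
  show "{x \<in> carrier R. \<forall>r\<in>carrier R. \<one> \<ominus> r \<otimes> x \<in> Units R} \<subseteq> jacobson R"
  proof
    fix x assume "x \<in> {x \<in> carrier R. \<forall>r\<in>carrier R. \<one> \<ominus> r \<otimes> x \<in> Units R}"
    then have xc: "x \<in> carrier R" and xu: "\<And>r. r \<in> carrier R \<Longrightarrow> \<one> \<ominus> r \<otimes> x \<in> Units R" by auto
    have "x \<in> M" if M: "maximal_left_ideal M R" for M
    proof (rule ccontr)
      assume xM: "x \<notin> M"
      have Mli: "left_ideal M R" and Mne: "M \<noteq> carrier R"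
        and Mmax: "\<And>K. left_ideal K R \<Longrightarrow> M \<subseteq> K \<Longrightarrow> K = M \<or> K = carrier R"
        using M unfolding maximal_left_ideal_def by blast+
      have Mc: "M \<subseteq> carrier R" by (rule left_idealD(1)[OF Mli])
      define K where "K = {z. \<exists>m\<in>M. \<exists>r\<in>carrier R. z = m \<oplus> r \<otimes> x}"
      have Kmem: "z \<in> K \<longleftrightarrow> (\<exists>m\<in>M. \<exists>r\<in>carrier R. z = m \<oplus> r \<otimes> x)" for z
        unfolding K_def by simp
      have Kli: "left_ideal K R"
      proof (rule left_idealI)
        show "K \<subseteq> carrier R"
        proof
          fix z assume "z \<in> K"
          then obtain m r where "m \<in> M" "r \<in> carrier R" "z = m \<oplus> r \<otimes> x" unfolding Kmem by blast
          then show "z \<in> carrier R" using Mc xc by auto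
        qed
        have "\<zero> = \<zero> \<oplus> \<zero> \<otimes> x" using xc by simp
        then show "\<zero> \<in> K" unfolding Kmem using left_idealD(2)[OF Mli] by blast
        show "a \<oplus> b \<in> K" if ab: "a \<in> K" "b \<in> K" for a b
        proof -
          from ab(1) obtain m1 r1 where 1: "m1 \<in> M" "r1 \<in> carrier R" "a = m1 \<oplus> r1 \<otimes> x" unfolding Kmem by blast
          from ab(2) obtain m2 r2 where 2: "m2 \<in> M" "r2 \<in> carrier R" "b = m2 \<oplus> r2 \<otimes> x" unfolding Kmem by blast
          have mc: "m1 \<in> carrier R" "m2 \<in> carrier R" using 1 2 Mc by auto
          have "a \<oplus> b = (m1 \<oplus> m2) \<oplus> (r1 \<oplus> r2) \<otimes> x" using 1(2,3) 2(2,3) mc xc by (simp add: rs)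
          moreover have "m1 \<oplus> m2 \<in> M" using left_idealD(3)[OF Mli 1(1) 2(1)] .
          moreover have "r1 \<oplus> r2 \<in> carrier R" using 1 2 by simp
          ultimately show ?thesis unfolding Kmem by blast
        qed
        show "\<ominus> a \<in> K" if aK: "a \<in> K" for a
        proof -
          from aK obtain m1 r1 where 1: "m1 \<in> M" "r1 \<in> carrier R" "a = m1 \<oplus> r1 \<otimes> x" unfolding Kmem by blast
          have mc: "m1 \<in> carrier R" using 1 Mc by auto
          have "\<ominus> a = \<ominus> m1 \<oplus> (\<ominus> r1) \<otimes> x" using 1(2,3) mc xc by (simp add: rs)
          moreover have "\<ominus> m1 \<in> M" using left_idealD(4)[OF Mli 1(1)] .
          moreover have "\<ominus> r1 \<in> carrier R" using 1 by simp
          ultimately show ?thesis unfolding Kmem by blast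
        qed
        show "c \<otimes> a \<in> K" if ca: "c \<in> carrier R" "a \<in> K" for c a
        proof -
          from ca(2) obtain m1 r1 where 1: "m1 \<in> M" "r1 \<in> carrier R" "a = m1 \<oplus> r1 \<otimes> x" unfolding Kmem by blast
          have mc: "m1 \<in> carrier R" using 1 Mc by auto
          have "c \<otimes> a = c \<otimes> m1 \<oplus> (c \<otimes> r1) \<otimes> x" using 1(2,3) mc xc ca(1) by (simp add: rs)
          moreover have "c \<otimes> m1 \<in> M" using left_idealD(5)[OF Mli ca(1) 1(1)] .
          moreover have "c \<otimes> r1 \<in> carrier R" using 1 ca by simp
          ultimately show ?thesis unfolding Kmem by blast
        qed
      qed
      have MK: "M \<subseteq> K"
      proof
        fix m assume m: "m \<in> M"
        then have "m = m \<oplus> \<zero> \<otimes> x" using Mc xc by auto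
        then show "m \<in> K" unfolding Kmem using m by blast
      qed
      have "x = \<zero> \<oplus> \<one> \<otimes> x" using xc by simp
      then have "x \<in> K" unfolding Kmem using left_idealD(2)[OF Mli] by blast
      then have "K \<noteq> M" using xM by blast
      then have "K = carrier R" using Mmax[OF Kli MK] by blast
      then have "\<one> \<in> K" by simp
      then obtain m r where mr: "m \<in> M" "r \<in> carrier R" "\<one> = m \<oplus> r \<otimes> x" unfolding Kmem by blast
      have mc: "m \<in> carrier R" using mr Mc by auto
      have "m = (m \<oplus> r \<otimes> x) \<ominus> r \<otimes> x" using mc mr(2) xc by (simp add: rs canc3)
      then have "m = \<one> \<ominus> r \<otimes> x" using mr(3) by simp
      then have mu: "m \<in> Units R" using xu[OF mr(2)] by simp
      have "inv m \<in> carrier R" using mu by auto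
      then have "inv m \<otimes> m \<in> M" using left_idealD(5)[OF Mli _ mr(1)] by blast
      then have "\<one> \<in> M" using mu by simp
      then show False using left_ideal_one[OF Mli] Mne by blast
    qed
    then show "x \<in> jacobson R" unfolding jacobson_def using xc by blast
  qed
qed

lemma jac_ideal: "ideal (jacobson R) R"
proof -
  define S where "S = {x \<in> carrier R. \<forall>r\<in>carrier R. \<one> \<ominus> r \<otimes> x \<in> Units R}"
  have Smem: "x \<in> S \<longleftrightarrow> x \<in> carrier R \<and> (\<forall>r\<in>carrier R. \<one> \<ominus> r \<otimes> x \<in> Units R)" for x
    unfolding S_def by simp
  have sub: "S \<subseteq> carrier R" unfolding S_def by blast
  have zero: "\<zero> \<in> S" unfolding Smem by (simp add: minus_eq)
  have add: "x \<oplus> y \<in> S" if x: "x \<in> S" and y: "y \<in> S" for x y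
  proof -
    have xc: "x \<in> carrier R" and yc: "y \<in> carrier R" using x y unfolding Smem by auto
    have "\<one> \<ominus> r \<otimes> (x \<oplus> y) \<in> Units R" if r: "r \<in> carrier R" for r
    proof -
      define u where "u = \<one> \<ominus> r \<otimes> x"
      have uu: "u \<in> Units R" using x r unfolding Smem u_def by auto
      have uc: "u \<in> carrier R" "inv u \<in> carrier R" using uu by auto
      have wr: "inv u \<otimes> r \<in> carrier R" using uc r by simp
      have v: "\<one> \<ominus> (inv u \<otimes> r) \<otimes> y \<in> Units R" using y wr unfolding Smem by auto
      have "u \<otimes> (\<one> \<ominus> (inv u \<otimes> r) \<otimes> y) = u \<ominus> (u \<otimes> inv u) \<otimes> (r \<otimes> y)"
        using uc r yc by (simp add: rs)
      also have "\<dots> = u \<ominus> r \<otimes> y" using uu r yc by simp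
      also have "\<dots> = \<one> \<ominus> r \<otimes> (x \<oplus> y)" unfolding u_def using r xc yc by (simp add: rs)
      finally have "u \<otimes> (\<one> \<ominus> (inv u \<otimes> r) \<otimes> y) = \<one> \<ominus> r \<otimes> (x \<oplus> y)" .
      then show ?thesis using uu v by (metis Units_m_closed)
    qed
    then show ?thesis unfolding Smem using xc yc by simp
  qed
  have neg: "\<ominus> x \<in> S" if x: "x \<in> S" for x
  proof -
    have xc: "x \<in> carrier R" using x unfolding Smem by auto
    have "\<one> \<ominus> r \<otimes> (\<ominus> x) \<in> Units R" if r: "r \<in> carrier R" for r
    proof -
      have "\<one> \<ominus> (\<ominus> r) \<otimes> x \<in> Units R" using x r unfolding Smem by auto
      moreover have "(\<ominus> r) \<otimes> x = r \<otimes> (\<ominus> x)" using r xc by (simp add: rs)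
      ultimately show ?thesis by simp
    qed
    then show ?thesis unfolding Smem using xc by simp
  qed
  have lm: "a \<otimes> x \<in> S" if x: "x \<in> S" and a: "a \<in> carrier R" for x a
  proof -
    have xc: "x \<in> carrier R" using x unfolding Smem by auto
    have "\<one> \<ominus> r \<otimes> (a \<otimes> x) \<in> Units R" if r: "r \<in> carrier R" for r
    proof -
      have "\<one> \<ominus> (r \<otimes> a) \<otimes> x \<in> Units R" using x r a unfolding Smem by auto
      then show ?thesis using r a xc by (simp add: m_assoc)
    qed
    then show ?thesis unfolding Smem using xc a by simp
  qed
  have rm: "x \<otimes> a \<in> S" if x: "x \<in> S" and a: "a \<in> carrier R" for x a
  proof -
    have xc: "x \<in> carrier R" using x unfolding Smem by auto
    have "\<one> \<ominus> r \<otimes> (x \<otimes> a) \<in> Units R" if r: "r \<in> carrier R" for r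
    proof -
      have "\<one> \<ominus> (a \<otimes> r) \<otimes> x \<in> Units R" using x r a unfolding Smem by auto
      then have "\<one> \<ominus> a \<otimes> (r \<otimes> x) \<in> Units R" using r a xc by (simp add: m_assoc)
      then have "\<one> \<ominus> (r \<otimes> x) \<otimes> a \<in> Units R" using unit_swap[of a "r \<otimes> x"] r a xc by simp
      then show ?thesis using r a xc by (simp add: m_assoc)
    qed
    then show ?thesis unfolding Smem using xc a by simp
  qed
  have "ideal S R"
    apply (rule idealI[OF ring_axioms])
      apply (rule additive_subgroup.a_subgroup)
      apply (rule add_sgI[OF sub zero])
    using add neg lm rm by auto
  then show ?thesis using jac_eq S_def by simp
qed

end

locale sring = ring R for R (structure) +
  fixes s
  assumes s_closed: "a \<in> carrier R \<Longrightarrow> s a \<in> carrier R"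
    and s_add: "\<lbrakk>a \<in> carrier R; b \<in> carrier R\<rbrakk> \<Longrightarrow> s (a \<oplus> b) = s a \<oplus> s b"
    and s_mult: "\<lbrakk>a \<in> carrier R; b \<in> carrier R\<rbrakk> \<Longrightarrow> s (a \<otimes> b) = s b \<otimes> s a"
    and s_inv: "a \<in> carrier R \<Longrightarrow> s (s a) = a"

lemma sringI: "star_ring R s \<Longrightarrow> sring R s"
  unfolding star_ring_def sring_def sring_axioms_def by blast

context sring begin

lemma s_one: "s \<one> = \<one>"
proof -
  have c: "s \<one> \<in> carrier R" by (simp add: s_closed)
  have "s \<one> = s \<one> \<otimes> s (s \<one>)" using c s_inv[OF one_closed] by simp
  also have "\<dots> = s (s \<one> \<otimes> \<one>)" by (rule s_mult[OF c one_closed, symmetric])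
  also have "\<dots> = \<one>" using c by (simp add: s_inv)
  finally show ?thesis .
qed

lemma s_zero: "s \<zero> = \<zero>"
proof -
  have c: "s \<zero> \<in> carrier R" by (simp add: s_closed)
  have e: "s \<zero> \<oplus> s \<zero> = s \<zero>" using s_add[of \<zero> \<zero>] by simp
  have "\<zero> = \<ominus> s \<zero> \<oplus> s \<zero>" using c by (simp add: l_neg)
  also have "\<dots> = \<ominus> s \<zero> \<oplus> (s \<zero> \<oplus> s \<zero>)" using e by simp
  also have "\<dots> = s \<zero>" using c by (simp add: a_assoc[symmetric] l_neg)
  finally show ?thesis by simp
qed

lemma s_neg: "a \<in> carrier R \<Longrightarrow> s (\<ominus> a) = \<ominus> s a"
proof -
  assume a: "a \<in> carrier R"
  have "s (\<ominus> a) \<oplus> s a = s (\<ominus> a \<oplus> a)" using a by (simp add: s_add)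
  also have "\<dots> = \<zero>" using a by (simp add: l_neg s_zero)
  finally have "s (\<ominus> a) \<oplus> s a = \<zero>" .
  then show ?thesis using a s_closed minus_equality by (metis a_inv_closed)
qed

lemma s_minus: "a \<in> carrier R \<Longrightarrow> b \<in> carrier R \<Longrightarrow> s (a \<ominus> b) = s a \<ominus> s b"
  by (simp add: minus_eq s_add s_neg)

lemma s_units: "u \<in> Units R \<Longrightarrow> s u \<in> Units R"
proof -
  assume u: "u \<in> Units R"
  have c: "u \<in> carrier R" "inv u \<in> carrier R" using u by auto
  have 1: "s (inv u) \<otimes> s u = \<one>" using c u by (simp add: s_mult[symmetric] s_one)
  have 2: "s u \<otimes> s (inv u) = \<one>" using c u by (simp add: s_mult[symmetric] s_one)
  show ?thesis using units_of_both[OF _ _ _ 1 2] c s_closed by simp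
qed

lemma jac_s: "x \<in> jacobson R \<Longrightarrow> s x \<in> jacobson R"
proof -
  assume x: "x \<in> jacobson R"
  have xc: "x \<in> carrier R" using x unfolding jacobson_def by simp
  have "\<one> \<ominus> r \<otimes> s x \<in> Units R" if r: "r \<in> carrier R" for r
  proof -
    have "x \<otimes> s r \<in> jacobson R" using ideal.I_r_closed[OF jac_ideal x] r s_closed by simp
    then have "\<one> \<ominus> \<one> \<otimes> (x \<otimes> s r) \<in> Units R" by (rule jac_unit[OF _ one_closed])
    then have u: "\<one> \<ominus> x \<otimes> s r \<in> Units R" using xc r s_closed by simp
    have "s (\<one> \<ominus> x \<otimes> s r) = \<one> \<ominus> r \<otimes> s x"
      using xc r s_closed by (simp add: s_minus s_one s_mult s_inv)
    then show ?thesis using s_units[OF u] by simp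
  qed
  then show ?thesis using jac_eq xc s_closed by auto
qed

lemma s_image_jac: "s ` jacobson R = jacobson R"
proof
  show "s ` jacobson R \<subseteq> jacobson R" using jac_s by blast
  show "jacobson R \<subseteq> s ` jacobson R"
  proof
    fix x assume x: "x \<in> jacobson R"
    have "x = s (s x)" using x s_inv unfolding jacobson_def by simp
    then show "x \<in> s ` jacobson R" using jac_s[OF x] by blast
  qed
qed

lemma quot_star_coset:
  assumes a: "a \<in> carrier R"
  shows "quot_star s (jacobson R +> a) = jacobson R +> s a"
proof -
  have Jc: "jacobson R \<subseteq> carrier R" unfolding jacobson_def by blast
  have "s ` (\<Union>h\<in>jacobson R. {h \<oplus> a}) = (\<Union>h\<in>jacobson R. {s (h \<oplus> a)})" by auto
  also have "\<dots> = (\<Union>h\<in>jacobson R. {s h \<oplus> s a})"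
    by (rule SUP_cong) (use Jc a in \<open>auto simp: s_add\<close>)
  also have "\<dots> = (\<Union>h\<in>s ` jacobson R. {h \<oplus> s a})" by blast
  also have "\<dots> = (\<Union>h\<in>jacobson R. {h \<oplus> s a})" using s_image_jac by simp
  finally show ?thesis unfolding quot_star_def a_r_coset_def' .
qed

end


context ring begin
lemma add_lcancel:
  assumes "x \<in> carrier R" "a \<in> carrier R" "b \<in> carrier R" "x \<oplus> a = x \<oplus> b"
  shows "a = b"
proof -
  have "a = \<ominus> x \<oplus> (x \<oplus> a)" using assms(1,2) by (simp add: a_assoc[symmetric] l_neg)
  also have "\<dots> = \<ominus> x \<oplus> (x \<oplus> b)" using assms(4) by simp
  also have "\<dots> = b" using assms(1,3) by (simp add: a_assoc[symmetric] l_neg)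
  finally show ?thesis .
qed

lemma units_pow: "u \<in> Units R \<Longrightarrow> u [^] (k::nat) \<in> Units R"
  by (induct k) auto

abbreviation "QR \<equiv> R Quot (jacobson R)"

lemma q_ring: "ring QR" by (rule ideal.quotient_is_ring[OF jac_ideal])
lemma q_hom: "((+>) (jacobson R)) \<in> ring_hom R QR" by (rule ideal.rcos_ring_hom[OF jac_ideal])

lemma q_mult: "a \<in> carrier R \<Longrightarrow> b \<in> carrier R \<Longrightarrow>
   (jacobson R +> a) \<otimes>\<^bsub>QR\<^esub> (jacobson R +> b) = jacobson R +> (a \<otimes> b)"
  using ring_hom_mult[OF q_hom] by simp

lemma q_one: "\<one>\<^bsub>QR\<^esub> = jacobson R +> \<one>"
  using ring_hom_one[OF q_hom] by simp

lemma q_in: "a \<in> carrier R \<Longrightarrow> jacobson R +> a \<in> carrier QR"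
  using ring_hom_closed[OF q_hom] by simp

lemma q_carrier: "X \<in> carrier QR \<Longrightarrow> \<exists>a\<in>carrier R. X = jacobson R +> a"
  unfolding FactRing_def A_RCOSETS_def RCOSETS_def a_r_coset_def by auto

lemma q_eq: "a \<in> carrier R \<Longrightarrow> b \<in> carrier R \<Longrightarrow>
   (jacobson R +> a = jacobson R +> b) \<longleftrightarrow> a \<ominus> b \<in> jacobson R"
  using quotient_eq_iff_same_a_r_cos[OF jac_ideal] by simp

lemma q_pow: "a \<in> carrier R \<Longrightarrow> (jacobson R +> a) [^]\<^bsub>QR\<^esub> (n::nat) = jacobson R +> (a [^] n)"
proof (induct n)
  case 0 then show ?case by (simp add: q_one)
next
  case (Suc n) then show ?case by (simp add: q_mult)
qed

lemma q_units: "u \<in> Units R \<Longrightarrow> jacobson R +> u \<in> Units QR"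
proof -
  assume u: "u \<in> Units R"
  have c: "u \<in> carrier R" "inv u \<in> carrier R" using u by auto
  have 1: "(jacobson R +> inv u) \<otimes>\<^bsub>QR\<^esub> (jacobson R +> u) = \<one>\<^bsub>QR\<^esub>" using c u by (simp add: q_mult q_one)
  have 2: "(jacobson R +> u) \<otimes>\<^bsub>QR\<^esub> (jacobson R +> inv u) = \<one>\<^bsub>QR\<^esub>" using c u by (simp add: q_mult q_one)
  show ?thesis unfolding Units_def using 1 2 q_in c by blast
qed

lemma q_one_unit: "x \<in> carrier R \<Longrightarrow> jacobson R +> x = jacobson R +> \<one> \<Longrightarrow> x \<in> Units R"
proof -
  assume x: "x \<in> carrier R" and e: "jacobson R +> x = jacobson R +> \<one>"
  have "x \<ominus> \<one> \<in> jacobson R" using q_eq[OF x one_closed] e by simp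
  then have "\<ominus> (x \<ominus> \<one>) \<in> jacobson R" using additive_subgroup.a_inv_closed[OF ideal.axioms(1)[OF jac_ideal]] by blast
  then have "\<one> \<ominus> \<one> \<otimes> (\<ominus> (x \<ominus> \<one>)) \<in> Units R" by (rule jac_unit[OF _ one_closed])
  moreover have "\<one> \<ominus> \<one> \<otimes> (\<ominus> (x \<ominus> \<one>)) = x" using x by (simp add: rs canc4)
  ultimately show ?thesis by simp
qed

lemma q_units_lift:
  assumes v: "v \<in> carrier R" and U: "jacobson R +> v \<in> Units QR"
  shows "v \<in> Units R"
proof -
  obtain W where W: "W \<in> carrier QR" "W \<otimes>\<^bsub>QR\<^esub> (jacobson R +> v) = \<one>\<^bsub>QR\<^esub>"
    "(jacobson R +> v) \<otimes>\<^bsub>QR\<^esub> W = \<one>\<^bsub>QR\<^esub>" using U unfolding Units_def by blast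
  obtain w where w: "w \<in> carrier R" "W = jacobson R +> w" using q_carrier[OF W(1)] by blast
  have "jacobson R +> (w \<otimes> v) = jacobson R +> \<one>" using W(2) w v by (simp add: q_mult q_one)
  then have u1: "w \<otimes> v \<in> Units R" using q_one_unit w v by simp
  have "jacobson R +> (v \<otimes> w) = jacobson R +> \<one>" using W(3) w v by (simp add: q_mult q_one)
  then have u2: "v \<otimes> w \<in> Units R" using q_one_unit w v by simp
  have c1: "inv (w \<otimes> v) \<in> carrier R" "inv (v \<otimes> w) \<in> carrier R" using u1 u2 by auto
  have l: "(inv (w \<otimes> v) \<otimes> w) \<otimes> v = \<one>" using u1 c1 w v by (simp add: m_assoc)
  have r: "v \<otimes> (w \<otimes> inv (v \<otimes> w)) = \<one>" using u2 c1 w v by (simp add: m_assoc[symmetric])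
  show ?thesis using units_of_both[OF _ v _ l r] c1 w by simp
qed

end


context sring begin

lemma spr_D:
  assumes "strongly_pi_star_regular R s" "a \<in> carrier R"
  obtains m :: nat and e u where "m \<ge> 1" "projection R s e" "u \<in> Units R" "a [^] m = e \<otimes> u"
    "a \<otimes> e = e \<otimes> a" "a \<otimes> u = u \<otimes> a" "e \<otimes> u = u \<otimes> e"
proof -
  have "\<exists>e u (m::nat). m \<ge> 1 \<and> projection R s e \<and> u \<in> Units R \<and>
        a [^] m = e \<otimes> u \<and> a \<otimes> e = e \<otimes> a \<and> a \<otimes> u = u \<otimes> a \<and> e \<otimes> u = u \<otimes> e"
    using assms unfolding strongly_pi_star_regular_def by (rule bspec)
  then obtain e u and m :: nat where "m \<ge> 1 \<and> projection R s e \<and> u \<in> Units R \<and>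
        a [^] m = e \<otimes> u \<and> a \<otimes> e = e \<otimes> a \<and> a \<otimes> u = u \<otimes> a \<and> e \<otimes> u = u \<otimes> e"
    by (elim exE)
  then show ?thesis by (elim conjE) (rule that)
qed

lemma projD: "projection R s p \<Longrightarrow> p \<in> carrier R"  "projection R s p \<Longrightarrow> p \<otimes> p = p"
  "projection R s p \<Longrightarrow> s p = p"
  unfolding projection_def by auto

lemma spr_idem:
  assumes spr: "strongly_pi_star_regular R s" and a: "a \<in> carrier R" and aa: "a \<otimes> a = a"
  shows "projection R s a"
proof -
  obtain m :: nat and e u where m: "m \<ge> 1" and e: "projection R s e" and u: "u \<in> Units R" and aeu: "a [^] m = e \<otimes> u"
    and ae: "a \<otimes> e = e \<otimes> a" and au: "a \<otimes> u = u \<otimes> a" and eu: "e \<otimes> u = u \<otimes> e"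
    by (rule spr_D[OF spr a])
  obtain k where k: "m = Suc k" using m by (cases m) auto
  have "a [^] m = a" using idem_pow[OF a aa] k by simp
  then have "a = e \<otimes> u" using aeu by simp
  then have "a = e" using idem_eq[OF a projD(1)[OF e] u aa projD(2)[OF e] _ ae au] by simp
  then show ?thesis using e by simp
qed

lemma spr_pxq:
  assumes spr: "strongly_pi_star_regular R s" and p: "projection R s p" and x: "x \<in> carrier R"
  shows "(p \<otimes> x) \<otimes> (\<one> \<ominus> p) = \<zero>"
proof -
  define q where "q = \<one> \<ominus> p"
  have pc: "p \<in> carrier R" and pp: "p \<otimes> p = p" and sp: "s p = p" using projD[OF p] by auto
  have qc: "q \<in> carrier R" unfolding q_def using pc by simp
  have pq: "p \<otimes> q = \<zero>" unfolding q_def using pc pp by (simp add: rs)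
  have qp: "q \<otimes> p = \<zero>" unfolding q_def using pc pp by (simp add: rs)
  have sq: "s q = q" unfolding q_def using pc sp by (simp add: s_minus s_one)
  define a where "a = p \<oplus> (p \<otimes> x) \<otimes> q"
  have ac: "a \<in> carrier R" unfolding a_def using pc qc x by simp
  have "a \<otimes> a = p \<otimes> p \<oplus> ((p \<otimes> p) \<otimes> x \<otimes> q \<oplus> ((p \<otimes> x) \<otimes> (q \<otimes> p) \<oplus> ((p \<otimes> x) \<otimes> (q \<otimes> p)) \<otimes> (x \<otimes> q)))"
    unfolding a_def using pc qc x by (simp add: rs)
  also have "\<dots> = a" unfolding a_def using pp qp pc qc x by simp
  finally have aa: "a \<otimes> a = a" .
  have "s a = a" using projD(3)[OF spr_idem[OF spr ac aa]] .
  moreover have "s a = p \<oplus> q \<otimes> (s x \<otimes> p)" unfolding a_def using pc qc x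
    by (simp add: s_add s_mult sp sq)
  ultimately have "p \<oplus> q \<otimes> (s x \<otimes> p) = p \<oplus> (p \<otimes> x) \<otimes> q" unfolding a_def by simp
  moreover have c1: "q \<otimes> (s x \<otimes> p) \<in> carrier R" using pc qc x s_closed by simp
  moreover have c2: "(p \<otimes> x) \<otimes> q \<in> carrier R" using pc qc x by simp
  ultimately have e: "q \<otimes> (s x \<otimes> p) = (p \<otimes> x) \<otimes> q" using add_lcancel[OF pc c1 c2] by blast
  have "(p \<otimes> x) \<otimes> q = (p \<otimes> p) \<otimes> (x \<otimes> q)" using pp pc x qc by (simp add: m_assoc)
  also have "\<dots> = p \<otimes> ((p \<otimes> x) \<otimes> q)" using pc x qc by (simp add: m_assoc)
  also have "\<dots> = p \<otimes> (q \<otimes> (s x \<otimes> p))" using e by simp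
  also have "\<dots> = (p \<otimes> q) \<otimes> (s x \<otimes> p)" using pc x qc s_closed by (simp add: m_assoc)
  also have "\<dots> = \<zero>" using pq pc x s_closed by simp
  finally show ?thesis unfolding q_def .
qed

lemma spr_central:
  assumes spr: "strongly_pi_star_regular R s" and p: "projection R s p"
  shows "central R p"
proof -
  define q where "q = \<one> \<ominus> p"
  have pc: "p \<in> carrier R" and pp: "p \<otimes> p = p" and sp: "s p = p" using projD[OF p] by auto
  have qc: "q \<in> carrier R" unfolding q_def using pc by simp
  have sq: "s q = q" unfolding q_def using pc sp by (simp add: s_minus s_one)
  have "p \<oplus> q = \<one> \<oplus> (p \<ominus> p)" unfolding q_def using pc by (simp add: minus_eq a_lcomm)
  also have "\<dots> = \<one>" using pc by (simp add: r_neg minus_eq)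
  finally have s1: "p \<oplus> q = \<one>" .
  have "p \<otimes> x = x \<otimes> p" if x: "x \<in> carrier R" for x
  proof -
    have 1: "(p \<otimes> x) \<otimes> q = \<zero>" using spr_pxq[OF spr p x] q_def by simp
    have "(p \<otimes> s x) \<otimes> q = \<zero>" using spr_pxq[OF spr p s_closed[OF x]] q_def by simp
    then have "s ((p \<otimes> s x) \<otimes> q) = \<zero>" by (simp add: s_zero)
    moreover have "s ((p \<otimes> s x) \<otimes> q) = q \<otimes> (x \<otimes> p)" using pc qc x s_closed
      by (simp add: s_mult s_inv sp sq)
    ultimately have 2: "q \<otimes> (x \<otimes> p) = \<zero>" by simp
    have "p \<otimes> x = (p \<otimes> x) \<otimes> (p \<oplus> q)" using s1 pc x by simp
    also have "\<dots> = (p \<otimes> x) \<otimes> p" using 1 pc qc x by (simp add: r_distr)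
    also have "\<dots> = p \<otimes> (x \<otimes> p)" using pc x by (simp add: m_assoc)
    also have "\<dots> = (p \<oplus> q) \<otimes> (x \<otimes> p)" using 2 pc qc x by (simp add: l_distr)
    also have "\<dots> = x \<otimes> p" using s1 pc x by simp
    finally show ?thesis .
  qed
  then show ?thesis unfolding central_def using pc by blast
qed

lemma spr_nilp_J:
  assumes spr: "strongly_pi_star_regular R s" and n: "n \<in> carrier R" and nt: "n [^] (t::nat) = \<zero>"
  shows "n \<in> jacobson R"
proof -
  have "\<one> \<ominus> r \<otimes> n \<in> Units R" if r: "r \<in> carrier R" for r
  proof -
    define b where "b = r \<otimes> n"
    have bc: "b \<in> carrier R" unfolding b_def using r n by simp
    obtain k :: nat and f v where k: "k \<ge> 1" and f: "projection R s f" and v: "v \<in> Units R" and bfv: "b [^] k = f \<otimes> v"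
      and bf: "b \<otimes> f = f \<otimes> b" and bv: "b \<otimes> v = v \<otimes> b" and fv: "f \<otimes> v = v \<otimes> f"
      by (rule spr_D[OF spr bc])
    have fc: "f \<in> carrier R" and ff: "f \<otimes> f = f" using projD[OF f] by auto
    have fcen: "\<And>y. y \<in> carrier R \<Longrightarrow> f \<otimes> y = y \<otimes> f"
      using spr_central[OF spr f] unfolding central_def by blast
    have vc: "v \<in> carrier R" "inv v \<in> carrier R" using v by auto
    obtain k' where k': "k = Suc k'" using k by (cases k) auto
    have "b [^] k \<otimes> inv v = f \<otimes> (v \<otimes> inv v)" using bfv fc vc by (simp add: m_assoc)
    then have f1: "f = b [^] k \<otimes> inv v" using v fc by simp
    have ib: "inv v \<otimes> b = b \<otimes> inv v" using comm_inv[OF bc v bv] by simp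
    have ibk: "inv v \<otimes> b [^] k = b [^] k \<otimes> inv v" using comm_pow[OF vc(2) bc ib] by simp
    define y where "y = (inv v \<otimes> b [^] k') \<otimes> r"
    have yc: "y \<in> carrier R" unfolding y_def using vc bc r by simp
    have "f = inv v \<otimes> b [^] k" using f1 ibk by simp
    also have "\<dots> = inv v \<otimes> (b [^] k' \<otimes> (r \<otimes> n))" using k' b_def by simp
    also have "\<dots> = y \<otimes> n" unfolding y_def using vc bc r n by (simp add: m_assoc)
    finally have fy: "f = y \<otimes> n" .
    define z where "z = f \<otimes> y"
    have zc: "z \<in> carrier R" unfolding z_def using fc yc by simp
    have "z \<otimes> n = f \<otimes> (y \<otimes> n)" unfolding z_def using fc yc n by (simp add: m_assoc)
    also have "\<dots> = f" using fy[symmetric] ff by simp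
    finally have zn: "z \<otimes> n = f" .
    have claim: "z [^] j \<otimes> (n [^] j \<otimes> f) = f" for j :: nat
    proof (induct j)
      case 0 then show ?case using fc by simp
    next
      case (Suc j)
      have nS: "n [^] Suc j = n \<otimes> n [^] j" by (rule nat_pow_Suc2[OF n])
      have zS: "z [^] Suc j = z [^] j \<otimes> z" by simp
      have njc: "n [^] j \<in> carrier R" "z [^] j \<in> carrier R" using n zc by auto
      have "z [^] Suc j \<otimes> (n [^] Suc j \<otimes> f) = z [^] j \<otimes> ((z \<otimes> n) \<otimes> (n [^] j \<otimes> f))"
        unfolding nS zS using njc zc n fc by (simp add: m_assoc)
      also have "\<dots> = z [^] j \<otimes> (f \<otimes> (n [^] j \<otimes> f))" using zn by simp
      also have "\<dots> = z [^] j \<otimes> ((n [^] j \<otimes> f) \<otimes> f)" using fcen[of "n [^] j \<otimes> f"] njc fc by simp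
      also have "\<dots> = z [^] j \<otimes> (n [^] j \<otimes> f)" using ff njc fc by (simp add: m_assoc)
      also have "\<dots> = f" using Suc .
      finally show ?case .
    qed
    have "f = z [^] t \<otimes> (n [^] t \<otimes> f)" using claim[of t] by simp
    also have "\<dots> = \<zero>" using nt zc fc by simp
    finally have "f = \<zero>" .
    then have "b [^] k = \<zero>" using bfv vc by simp
    then have "\<one> \<ominus> b \<in> Units R" by (rule nilp_unit[OF bc])
    then show ?thesis unfolding b_def .
  qed
  then show ?thesis using jac_eq n by simp
qed

lemma spr_nil:
  assumes spr: "strongly_pi_star_regular R s"
  shows "nil_set R (jacobson R)"
  unfolding nil_set_def
proof
  fix x assume x: "x \<in> jacobson R"
  have xc: "x \<in> carrier R" using x unfolding jacobson_def by simp
  obtain m :: nat and e u where m: "m \<ge> 1" and e: "projection R s e" and u: "u \<in> Units R" and xeu: "x [^] m = e \<otimes> u"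
    and xe: "x \<otimes> e = e \<otimes> x" and xu: "x \<otimes> u = u \<otimes> x" and eu: "e \<otimes> u = u \<otimes> e"
    by (rule spr_D[OF spr xc])
  have ec: "e \<in> carrier R" and ee: "e \<otimes> e = e" using projD[OF e] by auto
  have uc: "u \<in> carrier R" "inv u \<in> carrier R" using u by auto
  obtain k where k: "m = Suc k" using m by (cases m) auto
  have "x [^] m = x [^] k \<otimes> x" using k by simp
  then have xm: "x [^] m \<in> jacobson R" using ideal.I_l_closed[OF jac_ideal x] xc by simp
  have "x [^] m \<otimes> inv u = e" using xeu ec uc u by (simp add: m_assoc)
  then have eJ: "e \<in> jacobson R" using ideal.I_r_closed[OF jac_ideal xm uc(2)] by simp
  have un: "\<one> \<ominus> \<one> \<otimes> e \<in> Units R" by (rule jac_unit[OF eJ one_closed])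
  then have un': "\<one> \<ominus> e \<in> Units R" using ec by simp
  have ic: "inv (\<one> \<ominus> e) \<in> carrier R" using un' by auto
  have z: "e \<otimes> (\<one> \<ominus> e) = \<zero>" using ec ee by (simp add: rs)
  have "e = e \<otimes> ((\<one> \<ominus> e) \<otimes> inv (\<one> \<ominus> e))" using un' ec by simp
  also have "\<dots> = (e \<otimes> (\<one> \<ominus> e)) \<otimes> inv (\<one> \<ominus> e)" using ec ic by (simp add: m_assoc)
  also have "\<dots> = \<zero>" using z ic by simp
  finally have "e = \<zero>" .
  then have "x [^] m = \<zero>" using xeu uc by simp
  then show "\<exists>n::nat. x [^] n = \<zero>" by blast
qed

end


context sring begin

lemma cpairD:
  assumes "cpair p q"
  shows "p \<in> carrier R" "q \<in> carrier R" "p \<otimes> p = p" "q \<otimes> q = q" "p \<otimes> q = \<zero>" "q \<otimes> p = \<zero>"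
    "p \<oplus> q = \<one>" "\<And>y. y \<in> carrier R \<Longrightarrow> p \<otimes> y = y \<otimes> p" "\<And>y. y \<in> carrier R \<Longrightarrow> q \<otimes> y = y \<otimes> q"
  using assms unfolding cpair_def by blast+

lemma lift_spr:
  assumes nil: "nil_set R (jacobson R)" and a: "a \<in> carrier R" and m: "m \<ge> 1"
    and pcen: "central R p" and pp: "p \<otimes> p = p" and sp: "s p = p"
    and v: "v \<in> carrier R" and vU: "jacobson R +> v \<in> Units QR"
    and eq: "jacobson R +> (a [^] (m::nat)) = jacobson R +> (p \<otimes> v)"
  shows "\<exists>e u (N::nat). N \<ge> 1 \<and> projection R s e \<and> u \<in> Units R \<and> a [^] N = e \<otimes> u \<and>
           a \<otimes> e = e \<otimes> a \<and> a \<otimes> u = u \<otimes> a \<and> e \<otimes> u = u \<otimes> e"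
proof -
  have pc: "p \<in> carrier R" using pcen unfolding central_def by blast
  have pcom: "\<And>y. y \<in> carrier R \<Longrightarrow> p \<otimes> y = y \<otimes> p" using pcen unfolding central_def by blast
  have vu: "v \<in> Units R" by (rule q_units_lift[OF v vU])
  define q where "q = \<one> \<ominus> p"
  have cp: "cpair p q" unfolding q_def by (rule cpairI[OF pcen pp])
  note qc = cpairD(2)[OF cp] and pq = cpairD(5)[OF cp] and qp = cpairD(6)[OF cp]
    and s1 = cpairD(7)[OF cp] and qcom = cpairD(9)[OF cp]
  define b where "b = a [^] m"
  have bc: "b \<in> carrier R" unfolding b_def using a by simp
  define j where "j = b \<ominus> p \<otimes> v"
  have jc: "j \<in> carrier R" unfolding j_def using bc pc v by simp
  have jJ: "j \<in> jacobson R" unfolding j_def b_def using q_eq[of "a [^] m" "p \<otimes> v"] eq a pc v by simp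
  have bj: "b = p \<otimes> v \<oplus> j" unfolding j_def using bc pc v by (simp add: minus_eq canc3)
  define d where "d = p \<otimes> v \<oplus> q"
  have dU: "d \<in> Units R" unfolding d_def by (rule pp_unit[OF cp vu])
  have dc: "d \<in> carrier R" "inv d \<in> carrier R" using dU by auto
  define c where "c = p \<otimes> b \<oplus> q"
  have "p \<otimes> b = (p \<otimes> p) \<otimes> v \<oplus> p \<otimes> j" unfolding bj using pc v jc by (simp add: r_distr m_assoc)
  then have pb: "p \<otimes> b = p \<otimes> v \<oplus> p \<otimes> j" using pp by simp
  have cd: "c = d \<oplus> p \<otimes> j" unfolding c_def d_def pb using pc v jc qc by (simp add: a_ac)
  have pjJ: "p \<otimes> j \<in> jacobson R" using ideal.I_l_closed[OF jac_ideal jJ pc] .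
  have pjc: "p \<otimes> j \<in> carrier R" using pc jc by simp
  define t where "t = \<one> \<ominus> (\<ominus> (inv d)) \<otimes> (p \<otimes> j)"
  have tU: "t \<in> Units R" unfolding t_def using jac_unit[OF pjJ] dc by simp
  have "d \<otimes> t = d \<oplus> (d \<otimes> inv d) \<otimes> (p \<otimes> j)" unfolding t_def using dc pjc by (simp add: rs)
  also have "\<dots> = c" using cd dU pjc by simp
  finally have dtc: "d \<otimes> t = c" .
  have cU: "c \<in> Units R" using dtc dU tU by (metis Units_m_closed)
  have "b \<otimes> q = (p \<otimes> v) \<otimes> q \<oplus> j \<otimes> q" unfolding bj using pc v jc qc by (simp add: l_distr)
  moreover have "(p \<otimes> v) \<otimes> q = \<zero>"
  proof -
    have "(p \<otimes> v) \<otimes> q = p \<otimes> (v \<otimes> q)" using pc v qc by (simp add: m_assoc)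
    also have "\<dots> = p \<otimes> (q \<otimes> v)" using qcom[OF v] by simp
    also have "\<dots> = (p \<otimes> q) \<otimes> v" using pc v qc by (simp add: m_assoc)
    finally show ?thesis using pq v by simp
  qed
  ultimately have "b \<otimes> q = j \<otimes> q" using jc qc by simp
  then have bqJ: "b \<otimes> q \<in> jacobson R" using ideal.I_r_closed[OF jac_ideal jJ qc] by simp
  have qbJ: "q \<otimes> b \<in> jacobson R" using bqJ qcom[OF bc] by simp
  obtain t0 :: nat where t0: "(q \<otimes> b) [^] t0 = \<zero>" using nil qbJ unfolding nil_set_def by blast
  define K where "K = Suc t0"
  have qbc: "q \<otimes> b \<in> carrier R" using qc bc by simp
  have "(q \<otimes> b) [^] K = \<zero>" unfolding K_def using t0 qbc by simp
  then have "q \<otimes> b [^] K = \<zero>" using qpow[OF cp bc, of K] qc by simp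
  moreover have "b [^] K = p \<otimes> b [^] K \<oplus> q \<otimes> b [^] K"
  proof -
    have "b [^] K = (p \<oplus> q) \<otimes> b [^] K" using s1 bc by simp
    then show ?thesis using pc qc bc by (simp add: l_distr)
  qed
  ultimately have bK: "b [^] K = p \<otimes> b [^] K" using pc bc by simp
  define N where "N = m * K"
  have aN: "a [^] N = b [^] K" unfolding N_def b_def using nat_pow_pow[OF a] by simp
  define u where "u = p \<otimes> a [^] N \<oplus> q"
  have uc: "u = c [^] K" unfolding u_def c_def using pp_pow[OF cp bc] aN by simp
  have uU: "u \<in> Units R" unfolding uc by (rule units_pow[OF cU])
  have uc': "u \<in> carrier R" using uU by auto
  have anc: "a [^] N \<in> carrier R" using a by simp
  have "p \<otimes> u = (p \<otimes> p) \<otimes> a [^] N \<oplus> p \<otimes> q" unfolding u_def using pc qc anc by (simp add: r_distr m_assoc)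
  also have "\<dots> = a [^] N" using pp pq bK aN anc pc by simp
  finally have pu: "a [^] N = p \<otimes> u" by simp
  have au: "a \<otimes> u = u \<otimes> a"
  proof -
    have "a \<otimes> u = (a \<otimes> p) \<otimes> a [^] N \<oplus> a \<otimes> q" unfolding u_def using a pc qc anc by (simp add: r_distr m_assoc)
    also have "\<dots> = (p \<otimes> a) \<otimes> a [^] N \<oplus> q \<otimes> a" using pcom[OF a] qcom[OF a] by simp
    also have "\<dots> = p \<otimes> (a \<otimes> a [^] N) \<oplus> q \<otimes> a" using a pc anc by (simp add: m_assoc)
    also have "\<dots> = p \<otimes> (a [^] N \<otimes> a) \<oplus> q \<otimes> a" using comm_pow[OF a a refl, of N] by simp
    also have "\<dots> = u \<otimes> a" unfolding u_def using a pc qc anc by (simp add: l_distr m_assoc)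
    finally show ?thesis .
  qed
  have N1: "N \<ge> 1" unfolding N_def K_def using m by simp
  have proj: "projection R s p" unfolding projection_def using pc pp sp by blast
  show ?thesis
    using N1 proj uU pu pcom[OF a] au pcom[OF uc']
    by (intro exI[of _ p] exI[of _ u] exI[of _ N]) simp
qed

end


context sring begin

lemma q_proj: "projection R s e \<Longrightarrow> projection QR (quot_star s) (jacobson R +> e)"
proof -
  assume e: "projection R s e"
  have ec: "e \<in> carrier R" and ee: "e \<otimes> e = e" and se: "s e = e" using projD[OF e] by auto
  show ?thesis unfolding projection_def
    using q_in[OF ec] q_mult[OF ec ec] ee quot_star_coset[OF ec] se by simp
qed

lemma fwd_Qspr:
  assumes spr: "strongly_pi_star_regular R s"
  shows "strongly_pi_star_regular QR (quot_star s)"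
  unfolding strongly_pi_star_regular_def
proof (intro ballI)
  fix A assume "A \<in> carrier QR"
  then obtain a where a: "a \<in> carrier R" and A: "A = jacobson R +> a" using q_carrier by blast
  obtain m :: nat and e u where m: "m \<ge> 1" and e: "projection R s e" and u: "u \<in> Units R" and aeu: "a [^] m = e \<otimes> u"
    and ae: "a \<otimes> e = e \<otimes> a" and au: "a \<otimes> u = u \<otimes> a" and eu: "e \<otimes> u = u \<otimes> e"
    by (rule spr_D[OF spr a])
  have ec: "e \<in> carrier R" using projD[OF e] by auto
  have uc: "u \<in> carrier R" using u by auto
  show "\<exists>E U (m::nat). m \<ge> 1 \<and> projection QR (quot_star s) E \<and> U \<in> Units QR \<and>
        A [^]\<^bsub>QR\<^esub> m = E \<otimes>\<^bsub>QR\<^esub> U \<and> A \<otimes>\<^bsub>QR\<^esub> E = E \<otimes>\<^bsub>QR\<^esub> A \<and>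
        A \<otimes>\<^bsub>QR\<^esub> U = U \<otimes>\<^bsub>QR\<^esub> A \<and> E \<otimes>\<^bsub>QR\<^esub> U = U \<otimes>\<^bsub>QR\<^esub> E"
  proof (rule exI[of _ "jacobson R +> e"], rule exI[of _ "jacobson R +> u"], rule exI[of _ m], intro conjI)
    show "m \<ge> 1" by (rule m)
    show "projection QR (quot_star s) (jacobson R +> e)" by (rule q_proj[OF e])
    show "jacobson R +> u \<in> Units QR" by (rule q_units[OF u])
    show "A [^]\<^bsub>QR\<^esub> m = (jacobson R +> e) \<otimes>\<^bsub>QR\<^esub> (jacobson R +> u)"
      unfolding A using a ec uc aeu by (simp add: q_pow q_mult)
    show "A \<otimes>\<^bsub>QR\<^esub> (jacobson R +> e) = (jacobson R +> e) \<otimes>\<^bsub>QR\<^esub> A"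
      unfolding A using a ec ae by (simp add: q_mult)
    show "A \<otimes>\<^bsub>QR\<^esub> (jacobson R +> u) = (jacobson R +> u) \<otimes>\<^bsub>QR\<^esub> A"
      unfolding A using a uc au by (simp add: q_mult)
    show "(jacobson R +> e) \<otimes>\<^bsub>QR\<^esub> (jacobson R +> u) = (jacobson R +> u) \<otimes>\<^bsub>QR\<^esub> (jacobson R +> e)"
      using ec uc eu by (simp add: q_mult)
  qed
qed

lemma fwd_Qssr:
  assumes spr: "strongly_pi_star_regular R s"
  shows "strongly_star_regular QR (quot_star s)"
  unfolding strongly_star_regular_def
proof (intro ballI)
  fix A assume "A \<in> carrier QR"
  then obtain a where a: "a \<in> carrier R" and A: "A = jacobson R +> a" using q_carrier by blast
  obtain m :: nat and e u where m: "m \<ge> 1" and e: "projection R s e" and u: "u \<in> Units R" and aeu: "a [^] m = e \<otimes> u"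
    and ae: "a \<otimes> e = e \<otimes> a" and au: "a \<otimes> u = u \<otimes> a" and eu: "e \<otimes> u = u \<otimes> e"
    by (rule spr_D[OF spr a])
  have ec: "e \<in> carrier R" and ee: "e \<otimes> e = e" using projD[OF e] by auto
  have uc: "u \<in> carrier R" using u by auto
  have ecen: "central R e" by (rule spr_central[OF spr e])
  have ecom: "\<And>y. y \<in> carrier R \<Longrightarrow> e \<otimes> y = y \<otimes> e" using ecen unfolding central_def by blast
  define q where "q = \<one> \<ominus> e"
  have cp: "cpair e q" unfolding q_def by (rule cpairI[OF ecen ee])
  note qc = cpairD(2)[OF cp] and eq0 = cpairD(5)[OF cp] and qe = cpairD(6)[OF cp]
  obtain k where k: "m = Suc k" using m by (cases m) auto
  define w where "w = e \<otimes> a \<oplus> q"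
  have wc: "w \<in> carrier R" unfolding w_def using ec a qc by simp
  have "w [^] m = e \<otimes> a [^] m \<oplus> q" unfolding w_def by (rule pp_pow[OF cp a])
  also have "\<dots> = (e \<otimes> e) \<otimes> u \<oplus> q" using aeu ec uc by (simp add: m_assoc)
  also have "\<dots> = e \<otimes> u \<oplus> q" using ee by simp
  finally have "w [^] m = e \<otimes> u \<oplus> q" .
  then have "w [^] Suc k \<in> Units R" using pp_unit[OF cp u] k by simp
  then have wU: "w \<in> Units R" by (rule unit_pow_unit[OF wc])
  have qac: "q \<otimes> a \<in> carrier R" using qc a by simp
  have "(q \<otimes> a) [^] Suc m = ((q \<otimes> a) [^] m \<otimes> q) \<otimes> a" using qc a by (simp add: m_assoc)
  also have "\<dots> = (q \<otimes> (e \<otimes> u)) \<otimes> a" using qpow[OF cp a, of m] aeu by simp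
  also have "\<dots> = ((q \<otimes> e) \<otimes> u) \<otimes> a" using qc ec uc by (simp add: m_assoc)
  also have "\<dots> = \<zero>" using qe uc a by simp
  finally have "(q \<otimes> a) [^] Suc m = \<zero>" .
  then have qaJ: "q \<otimes> a \<in> jacobson R" by (rule spr_nilp_J[OF spr qac])
  have ew: "e \<otimes> w = e \<otimes> a"
  proof -
    have "e \<otimes> w = (e \<otimes> e) \<otimes> a \<oplus> e \<otimes> q" unfolding w_def using ec a qc by (simp add: r_distr m_assoc)
    then show ?thesis using ee eq0 ec a by simp
  qed
  have "a \<ominus> e \<otimes> w = q \<otimes> a" unfolding ew q_def using a ec by (simp add: rs)
  then have "jacobson R +> a = jacobson R +> (e \<otimes> w)" using q_eq[OF a] ec wc qaJ by simp
  then have A1: "A = (jacobson R +> e) \<otimes>\<^bsub>QR\<^esub> (jacobson R +> w)" unfolding A using ec wc by (simp add: q_mult)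
  have A2: "A = (jacobson R +> w) \<otimes>\<^bsub>QR\<^esub> (jacobson R +> e)"
    using A1 ec wc ecom[OF wc] by (simp add: q_mult)
  show "\<exists>P U. projection QR (quot_star s) P \<and> U \<in> Units QR \<and> A = P \<otimes>\<^bsub>QR\<^esub> U \<and> A = U \<otimes>\<^bsub>QR\<^esub> P"
    using q_proj[OF e] q_units[OF wU] A1 A2 by blast
qed

lemma fwd_idem:
  assumes spr: "strongly_pi_star_regular R s" and E: "idempotent_el QR E"
  shows "\<exists>p. projection R s p \<and> central R p \<and> jacobson R +> p = E"
proof -
  have Ec: "E \<in> carrier QR" and EE: "E \<otimes>\<^bsub>QR\<^esub> E = E" using E unfolding idempotent_el_def by auto
  obtain a where a: "a \<in> carrier R" and A: "E = jacobson R +> a" using q_carrier[OF Ec] by blast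
  obtain m :: nat and e u where m: "m \<ge> 1" and e: "projection R s e" and u: "u \<in> Units R" and aeu: "a [^] m = e \<otimes> u"
    and ae: "a \<otimes> e = e \<otimes> a" and au: "a \<otimes> u = u \<otimes> a" and eu: "e \<otimes> u = u \<otimes> e"
    by (rule spr_D[OF spr a])
  have ec: "e \<in> carrier R" and ee: "e \<otimes> e = e" using projD[OF e] by auto
  have uc: "u \<in> carrier R" using u by auto
  obtain k where k: "m = Suc k" using m by (cases m) auto
  have "E [^]\<^bsub>QR\<^esub> m = E" unfolding k by (rule ring.idem_pow[OF q_ring Ec EE])
  moreover have "E [^]\<^bsub>QR\<^esub> m = (jacobson R +> e) \<otimes>\<^bsub>QR\<^esub> (jacobson R +> u)"
    unfolding A using a ec uc aeu by (simp add: q_pow q_mult)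
  ultimately have Eeu: "E = (jacobson R +> e) \<otimes>\<^bsub>QR\<^esub> (jacobson R +> u)" by simp
  have "E = jacobson R +> e"
  proof (rule ring.idem_eq[OF q_ring Ec q_in[OF ec] q_units[OF u] EE _ Eeu])
    show "(jacobson R +> e) \<otimes>\<^bsub>QR\<^esub> (jacobson R +> e) = jacobson R +> e" using ec ee by (simp add: q_mult)
    show "E \<otimes>\<^bsub>QR\<^esub> (jacobson R +> e) = (jacobson R +> e) \<otimes>\<^bsub>QR\<^esub> E"
      unfolding A using a ec ae by (simp add: q_mult)
    show "E \<otimes>\<^bsub>QR\<^esub> (jacobson R +> u) = (jacobson R +> u) \<otimes>\<^bsub>QR\<^esub> E"
      unfolding A using a uc au by (simp add: q_mult)
  qed
  then show ?thesis using e spr_central[OF spr e] by blast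
qed

lemma bwd2:
  assumes Qspr: "strongly_pi_star_regular QR (quot_star s)" and nil: "nil_set R (jacobson R)"
    and cen: "\<forall>p. projection R s p \<longrightarrow> central R p"
    and lift: "\<forall>P. projection QR (quot_star s) P \<longrightarrow> (\<exists>p. projection R s p \<and> jacobson R +> p = P)"
  shows "strongly_pi_star_regular R s"
  unfolding strongly_pi_star_regular_def
proof (intro ballI)
  fix a assume a: "a \<in> carrier R"
  have Ac: "jacobson R +> a \<in> carrier QR" by (rule q_in[OF a])
  have "\<exists>E U (m::nat). m \<ge> 1 \<and> projection QR (quot_star s) E \<and> U \<in> Units QR \<and>
        (jacobson R +> a) [^]\<^bsub>QR\<^esub> m = E \<otimes>\<^bsub>QR\<^esub> U \<and> (jacobson R +> a) \<otimes>\<^bsub>QR\<^esub> E = E \<otimes>\<^bsub>QR\<^esub> (jacobson R +> a) \<and>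
        (jacobson R +> a) \<otimes>\<^bsub>QR\<^esub> U = U \<otimes>\<^bsub>QR\<^esub> (jacobson R +> a) \<and> E \<otimes>\<^bsub>QR\<^esub> U = U \<otimes>\<^bsub>QR\<^esub> E"
    using Qspr Ac unfolding strongly_pi_star_regular_def by (rule bspec)
  then obtain E U and m :: nat where m: "m \<ge> 1" and E: "projection QR (quot_star s) E" and U: "U \<in> Units QR"
    and AEU: "(jacobson R +> a) [^]\<^bsub>QR\<^esub> m = E \<otimes>\<^bsub>QR\<^esub> U"
    by (elim exE conjE)
  obtain p where p: "projection R s p" and pE: "jacobson R +> p = E" using lift E by blast
  have pc: "p \<in> carrier R" and pp: "p \<otimes> p = p" and sp: "s p = p" using projD[OF p] by auto
  have pcen: "central R p" using cen p by blast
  have Uc: "U \<in> carrier QR" using U unfolding Units_def by blast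
  obtain v where v: "v \<in> carrier R" and vU: "U = jacobson R +> v" using q_carrier[OF Uc] by blast
  have eq: "jacobson R +> (a [^] m) = jacobson R +> (p \<otimes> v)"
    using AEU pE[symmetric] vU a pc v by (simp add: q_pow q_mult)
  show "\<exists>e u (m::nat). m \<ge> 1 \<and> projection R s e \<and> u \<in> Units R \<and> a [^] m = e \<otimes> u \<and>
        a \<otimes> e = e \<otimes> a \<and> a \<otimes> u = u \<otimes> a \<and> e \<otimes> u = u \<otimes> e"
    by (rule lift_spr[OF nil a m pcen pp sp v _ eq]) (use U vU in simp)
qed

lemma bwd3:
  assumes Qssr: "strongly_star_regular QR (quot_star s)" and nil: "nil_set R (jacobson R)"
    and lift: "\<forall>E. idempotent_el QR E \<longrightarrow> (\<exists>p. projection R s p \<and> central R p \<and> jacobson R +> p = E)"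
  shows "strongly_pi_star_regular R s"
  unfolding strongly_pi_star_regular_def
proof (intro ballI)
  fix a assume a: "a \<in> carrier R"
  have Ac: "jacobson R +> a \<in> carrier QR" by (rule q_in[OF a])
  have "\<exists>P U. projection QR (quot_star s) P \<and> U \<in> Units QR \<and>
        jacobson R +> a = P \<otimes>\<^bsub>QR\<^esub> U \<and> jacobson R +> a = U \<otimes>\<^bsub>QR\<^esub> P"
    using Qssr Ac unfolding strongly_star_regular_def by (rule bspec)
  then obtain P U where P: "projection QR (quot_star s) P" and U: "U \<in> Units QR"
    and APU: "jacobson R +> a = P \<otimes>\<^bsub>QR\<^esub> U"
    by (elim exE conjE)
  have "idempotent_el QR P" using P unfolding projection_def idempotent_el_def by blast
  then obtain p where p: "projection R s p" and pcen: "central R p" and pP: "jacobson R +> p = P"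
    using lift by blast
  have pc: "p \<in> carrier R" and pp: "p \<otimes> p = p" and sp: "s p = p" using projD[OF p] by auto
  have Uc: "U \<in> carrier QR" using U unfolding Units_def by blast
  obtain v where v: "v \<in> carrier R" and vU: "U = jacobson R +> v" using q_carrier[OF Uc] by blast
  have eq: "jacobson R +> (a [^] (1::nat)) = jacobson R +> (p \<otimes> v)"
    using APU pP[symmetric] vU a pc v by (simp add: q_mult)
  show "\<exists>e u (m::nat). m \<ge> 1 \<and> projection R s e \<and> u \<in> Units R \<and> a [^] m = e \<otimes> u \<and>
        a \<otimes> e = e \<otimes> a \<and> a \<otimes> u = u \<otimes> a \<and> e \<otimes> u = u \<otimes> e"
    by (rule lift_spr[OF nil a _ pcen pp sp v _ eq]) (use U vU in simp)+
qed

end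

theorem corollary3p7:
  fixes R :: "('a, 'b) ring_scheme" and s :: "'a \<Rightarrow> 'a"
  assumes "star_ring R s"
  defines "J \<equiv> jacobson R"
  shows "(strongly_pi_star_regular R s \<longleftrightarrow>
            (strongly_pi_star_regular (R Quot J) (quot_star s) \<and> nil_set R J \<and>
             (\<forall>p. projection R s p \<longrightarrow> central R p) \<and>
             (\<forall>P. projection (R Quot J) (quot_star s) P \<longrightarrow>
                  (\<exists>p. projection R s p \<and> J +>\<^bsub>R\<^esub> p = P)))) \<and>
         (strongly_pi_star_regular R s \<longleftrightarrow>
            (strongly_star_regular (R Quot J) (quot_star s) \<and> nil_set R J \<and>
             (\<forall>E. idempotent_el (R Quot J) E \<longrightarrow>
                  (\<exists>p. projection R s p \<and> central R p \<and> J +>\<^bsub>R\<^esub> p = E))))"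
proof -
  interpret sring R s by (rule sringI[OF assms(1)])
  have f1: "strongly_pi_star_regular (R Quot J) (quot_star s)" if spr: "strongly_pi_star_regular R s"
    unfolding J_def by (rule fwd_Qspr[OF spr])
  have f2: "nil_set R J" if spr: "strongly_pi_star_regular R s"
    unfolding J_def by (rule spr_nil[OF spr])
  have f3: "\<forall>p. projection R s p \<longrightarrow> central R p" if spr: "strongly_pi_star_regular R s"
    using spr_central[OF spr] by blast
  have f5: "\<forall>E. idempotent_el (R Quot J) E \<longrightarrow> (\<exists>p. projection R s p \<and> central R p \<and> J +>\<^bsub>R\<^esub> p = E)"
    if spr: "strongly_pi_star_regular R s"
    unfolding J_def using fwd_idem[OF spr] by blast
  have f4: "\<forall>P. projection (R Quot J) (quot_star s) P \<longrightarrow> (\<exists>p. projection R s p \<and> J +>\<^bsub>R\<^esub> p = P)"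
    if spr: "strongly_pi_star_regular R s"
  proof (intro allI impI)
    fix P assume "projection (R Quot J) (quot_star s) P"
    then have "idempotent_el (R Quot J) P" unfolding projection_def idempotent_el_def by blast
    then show "\<exists>p. projection R s p \<and> J +>\<^bsub>R\<^esub> p = P" using f5[OF spr] by blast
  qed
  have f6: "strongly_star_regular (R Quot J) (quot_star s)" if spr: "strongly_pi_star_regular R s"
    unfolding J_def by (rule fwd_Qssr[OF spr])
  have b2: "strongly_pi_star_regular R s" if
    "strongly_pi_star_regular (R Quot J) (quot_star s)" "nil_set R J"
    "\<forall>p. projection R s p \<longrightarrow> central R p"
    "\<forall>P. projection (R Quot J) (quot_star s) P \<longrightarrow> (\<exists>p. projection R s p \<and> J +>\<^bsub>R\<^esub> p = P)"
    using bwd2 that unfolding J_def by blast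
  have b3: "strongly_pi_star_regular R s" if
    "strongly_star_regular (R Quot J) (quot_star s)" "nil_set R J"
    "\<forall>E. idempotent_el (R Quot J) E \<longrightarrow> (\<exists>p. projection R s p \<and> central R p \<and> J +>\<^bsub>R\<^esub> p = E)"
    using bwd3 that unfolding J_def by blast
  show ?thesis
  proof (intro conjI iffI)
    show "strongly_pi_star_regular R s" if "strongly_pi_star_regular (R Quot J) (quot_star s) \<and> nil_set R J \<and>
             (\<forall>p. projection R s p \<longrightarrow> central R p) \<and>
             (\<forall>P. projection (R Quot J) (quot_star s) P \<longrightarrow>
                  (\<exists>p. projection R s p \<and> J +>\<^bsub>R\<^esub> p = P))"
      using b2 that by blast
    show "strongly_pi_star_regular R s" if "strongly_star_regular (R Quot J) (quot_star s) \<and> nil_set R J \<and>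
             (\<forall>E. idempotent_el (R Quot J) E \<longrightarrow>
                  (\<exists>p. projection R s p \<and> central R p \<and> J +>\<^bsub>R\<^esub> p = E))"
      using b3 that by blast
  qed (use f1 f2 f3 f4 f6 f5 in blast)+
qed



end
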